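(* Assume that $(\hat R,\hat F)$ satisfies conditions (i), (ii), (iii) and (iv), and let $M$ be a half-quantum matrix. Then \[ (M_{\overline{1\to n}})^{a_1\dots a_n}_{b_1\dots b_n}\,\epsilon^{b_1\dots b_n}=\det\nolimits_q(M)\,\epsilon^{a_1\dots a_n}, \] and consequently $\tilde M^{\wedge n}=\det_q(M)\,\mathcal D$.
   Context: Let $V$ be a finite-dimensional complex vector space, $\mathrm{Id}$ the identity, $P$ the flip on $V\otimes V$. For an operator $X$ on $V$ (possibly with entries in an associative algebra $\mathfrak A$), $X_j$ denotes $X$ acting in the $j$-th tensor factor of $V^{\otimes m}$; for $Y$ on $V\otimes V$, $Y_{j,k}$ denotes $Y$ in factors $j,k$ and $Y_j:=Y_{j,j+1}$. $\mathrm{tr}_{(i_1,\dots,i_k)}$ is the partial trace over the listed factors. $j_q:=q^{j-1}+q^{j-3}+\dots+q^{-j+1}$; $j$ is $q$-admissible if $k_q\ne0$ for $k=1,\dots,j$. Upper indices are row indices and lower indices column indices; summation over repeated indices is implied. Let $q\in\mathbb C^*$, $\hat R,\hat F\in\mathrm{Aut}(V\otimes V)$. Conditions: (i) $\hat R_{12}\hat R_{23}\hat R_{12}=\hat R_{23}\hat R_{12}\hat R_{23}$, $\hat F_{12}\hat F_{23}\hat F_{12}=\hat F_{23}\hat F_{12}\hat F_{23}$, $\hat R_{12}\hat F_{23}\hat F_{12}=\hat F_{23}\hat F_{12}\hat R_{23}$, $\hat F_{12}\hat F_{23}\hat R_{12}=\hat R_{23}\hat F_{12}\hat F_{23}$.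 (ii) $2$ is $q$-admissible and $\hat R=qS^{(2)}-q^{-1}A^{(2)}$ with $S^{(2)},A^{(2)}$ idempotents, $S^{(2)}+A^{(2)}=\mathrm{Id}$. Higher $q$-antisymmetrizers: $A^{(1)}=\mathrm{Id}$ and for $k+1$ $q$-admissible $(k+1)_qA^{(k+1)}:=A^{(k)}(q^k\mathrm{Id}-k_q\hat R_k)A^{(k)}$. (iii) ($\hat R$ even of height $n$) $n$ is $q$-admissible, $\mathrm{rank}\,A^{(n)}=1$, and $A^{(n)}(q^n\mathrm{Id}-n_q\hat R_n)A^{(n)}=0$. (iv) there is $\Psi\in\mathrm{Aut}(V\otimes V)$ with $\mathrm{tr}_{(2)}(\Psi_{12}\hat F_{23})=P_{13}$. Quantum trace: $D_1:=\mathrm{tr}_{(2)}(\Psi_{12})$, $\mathrm{tr}_{F,(i_1,\dots,i_k)}(X):=\mathrm{tr}_{(i_1,\dots,i_k)}(D_{i_1}\cdots D_{i_k}X)$. Under (iii), there are tensors $\epsilon^{a_1\dots a_n}$, $\epsilon_{a_1\dots a_n}$ with $(A^{(n)})^{b_1\dots b_n}_{a_1\dots a_n}=\epsilon^{b_1\dots b_n}\epsilon_{a_1\dots a_n}$ and $\epsilon_{a_1\dots a_n}\epsilon^{a_1\dots a_n}=1$. For an $\mathfrak A$-valued $M$ on $V$: $M_{\bar1}:=M_1$, $M_{\overline{k+1}}:=\hat F_kM_{\bar k}\hat F_k^{-1}$, $M_{\overline{1\to k}}:=M_{\bar1}\cdots M_{\bar k}$. A half-quantum matrix is an $\mathfrak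 A$-valued $M$ with $S^{(2)}_{12}M_{\bar1}M_{\bar2}A^{(2)}_{12}=0$. Its quantum determinant is $\det_q(M):=\epsilon_{a_1\dots a_n}(M_{\overline{1\to n}})^{a_1\dots a_n}_{b_1\dots b_n}\epsilon^{b_1\dots b_n}\in\mathfrak A$. $(\tilde M^{\wedge n})_1:=\mathrm{tr}_{F,(2,\dots,n)}(M_{\overline{1\to n}}A^{(n)})$ and $\mathcal D\in\mathrm{End}(V)$ is defined by $\mathcal D_1:=\mathrm{tr}_{F,(2,\dots,n)}(A^{(n)})$. *)

theory Defs
  imports Complex_Main
begin

text \<open>V has basis indexed by 0,...,N-1 (N = dim V).
An operator on the m-fold tensor power of V is a function X taking a row multi-index
a and a column multi-index b (lists of length m with entries < N) to the matrix
entry X^a_b. Only its values on idx m N matter. Tensor factors (positions) are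
numbered 1,...,m as in the paper.\<close>

type_synonym 'a op = "nat list \<Rightarrow> nat list \<Rightarrow> 'a"

definition idx :: "nat \<Rightarrow> nat \<Rightarrow> nat list set" where
  "idx m N = {xs. length xs = m \<and> set xs \<subseteq> {..<N}}"

definition opeq :: "nat \<Rightarrow> nat \<Rightarrow> 'a op \<Rightarrow> 'a op \<Rightarrow> bool" where
  "opeq N m X Y \<longleftrightarrow> (\<forall>a\<in>idx m N. \<forall>b\<in>idx m N. X a b = Y a b)"

definition idop :: "'a::{zero,one} op" where
  "idop a b = (if a = b then 1 else 0)"

text \<open>Y acting in the tensor factors ps (listed in the order of Y's own factors),
identity in all other factors.\<close>
definition emb :: "nat list \<Rightarrow> 'a::zero op \<Rightarrow> 'a op" where
  "emb ps Y a b = (if \<forall>i<length a. Suc i \<notin> set ps \<longrightarrow> a ! i = b ! i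
      then Y (map (\<lambda>p. a ! (p - 1)) ps) (map (\<lambda>p. b ! (p - 1)) ps) else 0)"

definition mmul :: "nat \<Rightarrow> nat \<Rightarrow> 'a::semiring_0 op \<Rightarrow> 'a op \<Rightarrow> 'a op" where
  "mmul N m X Y a b = (\<Sum>c\<in>idx m N. X a c * Y c b)"

definition lsmul :: "(complex \<Rightarrow> 'a \<Rightarrow> 'a) \<Rightarrow> nat \<Rightarrow> nat \<Rightarrow> complex op \<Rightarrow> 'a::ab_group_add op \<Rightarrow> 'a op" where
  "lsmul sm N m C X a b = (\<Sum>c\<in>idx m N. sm (C a c) (X c b))"

definition rsmul :: "(complex \<Rightarrow> 'a \<Rightarrow> 'a) \<Rightarrow> nat \<Rightarrow> nat \<Rightarrow> 'a::ab_group_add op \<Rightarrow> complex op \<Rightarrow> 'a op" where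
  "rsmul sm N m X C a b = (\<Sum>c\<in>idx m N. sm (C c b) (X a c))"

definition calg :: "(complex \<Rightarrow> 'a::ring \<Rightarrow> 'a) \<Rightarrow> bool" where
  "calg sm \<longleftrightarrow> (\<forall>c d x y. sm c (x + y) = sm c x + sm c y \<and> sm (c + d) x = sm c x + sm d x
      \<and> sm (c * d) x = sm c (sm d x) \<and> sm 1 x = x
      \<and> sm c (x * y) = sm c x * y \<and> sm c (x * y) = x * sm c y)"

text \<open>Partial trace. fill m 1 ps a c is the length-m multi-index carrying the entries
of c at the positions in ps and the entries of a at the other positions (in order).\<close>
fun fill :: "nat \<Rightarrow> nat \<Rightarrow> nat set \<Rightarrow> nat list \<Rightarrow> nat list \<Rightarrow> nat list" where
  "fill 0 j ps a c = []"
| "fill (Suc k) j ps a c = (if j \<in> ps then hd c # fill k (Suc j) ps a (tl c)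
                             else hd a # fill k (Suc j) ps (tl a) c)"

definition ptr :: "nat \<Rightarrow> nat \<Rightarrow> nat set \<Rightarrow> 'a::comm_monoid_add op \<Rightarrow> 'a op" where
  "ptr N m ps X a b = (\<Sum>c\<in>idx (card ps) N. X (fill m 1 ps a c) (fill m 1 ps b c))"

definition qnum :: "nat \<Rightarrow> complex \<Rightarrow> complex" where
  "qnum j q = (\<Sum>i<j. q powi (int j - 1 - 2 * int i))"

definition qadm :: "nat \<Rightarrow> complex \<Rightarrow> bool" where
  "qadm j q \<longleftrightarrow> (\<forall>k\<in>{1..j}. qnum k q \<noteq> 0)"

text \<open>q-antisymmetrizers. asym_step N q R k Ak = A^(k) (q^k Id - k_q R_k) A^(k)
on the (k+1)-fold tensor power, where Ak is A^(k).\<close>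
definition asym_step :: "nat \<Rightarrow> complex \<Rightarrow> complex op \<Rightarrow> nat \<Rightarrow> complex op \<Rightarrow> complex op" where
  "asym_step N q R k Ak =
     mmul N (Suc k) (mmul N (Suc k) (emb [1..<Suc k] Ak)
        (\<lambda>a b. q ^ k * idop a b - qnum k q * emb [k, Suc k] R a b)) (emb [1..<Suc k] Ak)"

fun asym :: "nat \<Rightarrow> complex \<Rightarrow> complex op \<Rightarrow> nat \<Rightarrow> complex op" where
  "asym N q R 0 = idop"
| "asym N q R (Suc 0) = idop"
| "asym N q R (Suc (Suc k)) =
     (\<lambda>a b. asym_step N q R (Suc k) (asym N q R (Suc k)) a b / qnum (Suc (Suc k)) q)"

fun Mbar :: "(complex \<Rightarrow> 'a \<Rightarrow> 'a) \<Rightarrow> nat \<Rightarrow> nat \<Rightarrow> complex op \<Rightarrow> complex op \<Rightarrow> 'a::ab_group_add op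
               \<Rightarrow> nat \<Rightarrow> 'a op" where
  "Mbar sm N m F Finv M 0 = emb [1] M"
| "Mbar sm N m F Finv M (Suc 0) = emb [1] M"
| "Mbar sm N m F Finv M (Suc (Suc k)) =
     lsmul sm N m (emb [Suc k, Suc (Suc k)] F)
       (rsmul sm N m (Mbar sm N m F Finv M (Suc k)) (emb [Suc k, Suc (Suc k)] Finv))"

fun Mprod :: "(complex \<Rightarrow> 'a \<Rightarrow> 'a) \<Rightarrow> nat \<Rightarrow> nat \<Rightarrow> complex op \<Rightarrow> complex op \<Rightarrow> 'a::ring op
               \<Rightarrow> nat \<Rightarrow> 'a op" where
  "Mprod sm N m F Finv M 0 = Mbar sm N m F Finv M 1"
| "Mprod sm N m F Finv M (Suc 0) = Mbar sm N m F Finv M 1"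
| "Mprod sm N m F Finv M (Suc (Suc k)) =
     mmul N m (Mprod sm N m F Finv M (Suc k)) (Mbar sm N m F Finv M (Suc (Suc k)))"

definition dprod :: "nat \<Rightarrow> nat \<Rightarrow> complex op \<Rightarrow> nat list \<Rightarrow> complex op" where
  "dprod N m D ps = foldr (\<lambda>i Y. mmul N m (emb [i] D) Y) ps idop"

definition flip :: "complex op" where
  "flip a b = (if a ! 0 = b ! 1 \<and> a ! 1 = b ! 0 then 1 else 0)"

definition invertible_op :: "nat \<Rightarrow> nat \<Rightarrow> complex op \<Rightarrow> bool" where
  "invertible_op N m X \<longleftrightarrow> (\<exists>Y. opeq N m (mmul N m X Y) idop \<and> opeq N m (mmul N m Y X) idop)"

end

theory Submission
  imports Defs
begin

definition sel :: "nat list \<Rightarrow> nat list \<Rightarrow> nat list" where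
  "sel ps a = map (\<lambda>p. a ! (p - 1)) ps"

fun upd :: "nat list \<Rightarrow> nat list \<Rightarrow> nat list \<Rightarrow> nat list" where
  "upd a [] d = a"
| "upd a (p # ps) d = (upd a ps (tl d))[p - 1 := hd d]"

definition okp :: "nat \<Rightarrow> nat list \<Rightarrow> bool" where
  "okp m ps \<longleftrightarrow> distinct ps \<and> set ps \<subseteq> {1..m}"

lemma length_sel[simp]: "length (sel ps a) = length ps"
  by (simp add: sel_def)

lemma len_upd[simp]: "length (upd a ps d) = length a"
  by (induction ps arbitrary: d) auto

lemma upd_nth_out: "Suc i \<notin> set ps \<Longrightarrow> 0 \<notin> set ps \<Longrightarrow> upd a ps d ! i = a ! i"
proof (induction ps arbitrary: d)
  case Nil then show ?case by simp
next
  case (Cons p ps)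
  then have "i \<noteq> p - 1" by (cases p) auto
  with Cons show ?case by simp
qed

lemma upd_sel_nth: "Suc i \<in> set ps \<Longrightarrow> i < length a \<Longrightarrow> upd a ps (sel ps c) ! i = c ! i"
proof (induction ps)
  case Nil then show ?case by simp
next
  case (Cons p ps)
  show ?case
  proof (cases "i = p - 1")
    case True
    then show ?thesis using Cons.prems by (simp add: sel_def)
  next
    case False
    then have "Suc i \<in> set ps" using Cons.prems by auto
    then show ?thesis using Cons False by (simp add: sel_def)
  qed
qed

lemma sel_upd: "distinct ps \<Longrightarrow> 0 \<notin> set ps \<Longrightarrow> \<forall>p\<in>set ps. p \<le> length a \<Longrightarrow> length d = length ps
   \<Longrightarrow> sel ps (upd a ps d) = d"
proof (induction ps arbitrary: d)
  case Nil then show ?case by (simp add: sel_def)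
next
  case (Cons p ps)
  then obtain x d' where d: "d = x # d'" by (cases d) auto
  have p1: "p - 1 < length a" using Cons.prems by (cases p) auto
  have "sel ps ((upd a ps d')[p - 1 := x]) = sel ps (upd a ps d')"
    unfolding sel_def
  proof (rule map_cong[OF refl])
    fix p' assume "p' \<in> set ps"
    have "p' \<noteq> p" using \<open>p' \<in> set ps\<close> Cons.prems(1) by auto
    moreover have "p' \<noteq> 0"
    proof
      assume "p' = 0" then show False using \<open>p' \<in> set ps\<close> Cons.prems(2) by simp
    qed
    moreover have "p \<noteq> 0" using Cons.prems(2) by auto
    ultimately have "p' - 1 \<noteq> p - 1" by arith
    then show "(upd a ps d')[p - 1 := x] ! (p' - 1) = upd a ps d' ! (p' - 1)" by simp
  qed
  also have "\<dots> = d'" using Cons d by auto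
  finally show ?case using d p1 by (simp add: sel_def)
qed

lemma upd_idx: "a \<in> idx m N \<Longrightarrow> d \<in> idx (length ps) N \<Longrightarrow> upd a ps d \<in> idx m N"
proof (induction ps arbitrary: d)
  case Nil then show ?case by simp
next
  case (Cons p ps)
  then obtain x d' where d: "d = x # d'" by (cases d) (auto simp: idx_def)
  with Cons.prems have "d' \<in> idx (length ps) N" "x < N" by (auto simp: idx_def)
  with Cons.IH[OF Cons.prems(1)] have "upd a ps d' \<in> idx m N" by auto
  then show ?case using d \<open>x < N\<close> by (auto simp: idx_def dest!: set_update_subset_insert[THEN subsetD])
qed

lemma sel_idx: "a \<in> idx m N \<Longrightarrow> set ps \<subseteq> {1..m} \<Longrightarrow> sel ps a \<in> idx (length ps) N"
proof -
  assume a: "a \<in> idx m N" and ps: "set ps \<subseteq> {1..m}"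
  have "x < N" if "x \<in> set (sel ps a)" for x
  proof -
    from that obtain p where p: "p \<in> set ps" "x = a ! (p - 1)" by (auto simp: sel_def)
    then have "p - 1 < length a" using a ps by (force simp: idx_def)
    then show "x < N" using p a by (auto simp: idx_def dest!: nth_mem)
  qed
  then show ?thesis by (auto simp: idx_def)
qed

lemma emb_sel: "emb ps Y a b = (if \<forall>i<length a. Suc i \<notin> set ps \<longrightarrow> a ! i = b ! i
      then Y (sel ps a) (sel ps b) else 0)"
  by (auto simp: emb_def sel_def)

lemma okpD: "okp m ps \<Longrightarrow> distinct ps" "okp m ps \<Longrightarrow> 0 \<notin> set ps" "okp m ps \<Longrightarrow> set ps \<subseteq> {1..m}"
  "okp m ps \<Longrightarrow> p \<in> set ps \<Longrightarrow> p \<le> m"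
  by (auto simp: okp_def)

lemma upd_sel_eq: "length c = length a \<Longrightarrow> \<forall>i<length a. Suc i \<notin> set ps \<longrightarrow> a ! i = c ! i
   \<Longrightarrow> 0 \<notin> set ps \<Longrightarrow> upd a ps (sel ps c) = c"
  apply (rule nth_equalityI)
   apply simp
  subgoal for i
    by (cases "Suc i \<in> set ps") (simp_all add: upd_sel_nth upd_nth_out)
  done

lemma bij_upd:
  assumes a: "a \<in> idx m N" and ps: "okp m ps"
  shows "bij_betw (upd a ps) (idx (length ps) N)
           {c\<in>idx m N. \<forall>i<length a. Suc i \<notin> set ps \<longrightarrow> a ! i = c ! i}"
proof -
  have la: "length a = m" using a by (simp add: idx_def)
  have pl: "\<forall>p\<in>set ps. p \<le> length a" using ps la by (auto simp: okp_def)
  show ?thesis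
  proof (rule bij_betw_byWitness[where f' = "sel ps"])
    show "\<forall>d\<in>idx (length ps) N. sel ps (upd a ps d) = d"
      using ps pl by (auto simp: okp_def idx_def intro!: sel_upd)
    show "\<forall>c\<in>{c\<in>idx m N. \<forall>i<length a. Suc i \<notin> set ps \<longrightarrow> a ! i = c ! i}. upd a ps (sel ps c) = c"
      using ps la by (auto simp: okp_def idx_def intro!: upd_sel_eq)
    show "upd a ps ` idx (length ps) N \<subseteq> {c\<in>idx m N. \<forall>i<length a. Suc i \<notin> set ps \<longrightarrow> a ! i = c ! i}"
      using a ps by (auto simp: okp_def intro!: upd_idx upd_nth_out[symmetric])
    show "sel ps ` {c\<in>idx m N. \<forall>i<length a. Suc i \<notin> set ps \<longrightarrow> a ! i = c ! i} \<subseteq> idx (length ps) N"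
      using ps by (auto simp: okp_def intro!: sel_idx)
  qed
qed

lemma finite_idx[simp]: "finite (idx m N)"
proof -
  have eq: "idx m N = {xs. set xs \<subseteq> {..<N} \<and> length xs = m}" by (auto simp: idx_def)
  show ?thesis unfolding eq by (rule finite_lists_length_eq) simp
qed

lemma idx_len[simp]: "c \<in> idx m N \<Longrightarrow> length c = m"
  by (simp add: idx_def)

lemma sum_emb_left:
  fixes f :: "'a::zero \<Rightarrow> 'c \<Rightarrow> 'd::comm_monoid_add"
  assumes a: "a \<in> idx m N" and ps: "okp m ps" and f0: "\<And>y. f 0 y = 0"
  shows "(\<Sum>c\<in>idx m N. f (emb ps X a c) (Y c)) = (\<Sum>d\<in>idx (length ps) N. f (X (sel ps a) d) (Y (upd a ps d)))"
proof -
  let ?T = "{c\<in>idx m N. \<forall>i<length a. Suc i \<notin> set ps \<longrightarrow> a ! i = c ! i}"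
  have "(\<Sum>c\<in>idx m N. f (emb ps X a c) (Y c)) = (\<Sum>c\<in>?T. f (emb ps X a c) (Y c))"
  proof (rule sum.mono_neutral_right)
    show "\<forall>c\<in>idx m N - ?T. f (emb ps X a c) (Y c) = 0"
    proof
      fix c assume c: "c \<in> idx m N - ?T"
      then obtain i where i: "i < length a" "Suc i \<notin> set ps" "a ! i \<noteq> c ! i" by auto
      have "emb ps X a c = 0" unfolding emb_sel using i by (metis (no_types, lifting))
      then show "f (emb ps X a c) (Y c) = 0" by (simp add: f0)
    qed
  qed auto
  also have "\<dots> = (\<Sum>c\<in>?T. f (X (sel ps a) (sel ps c)) (Y c))"
  proof (rule sum.cong[OF refl])
    fix c assume c: "c \<in> ?T"
    then have "\<forall>i<length a. Suc i \<notin> set ps \<longrightarrow> a ! i = c ! i" by auto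
    then show "f (emb ps X a c) (Y c) = f (X (sel ps a) (sel ps c)) (Y c)" by (simp add: emb_sel)
  qed
  also have "\<dots> = (\<Sum>d\<in>idx (length ps) N. f (X (sel ps a) (sel ps (upd a ps d))) (Y (upd a ps d)))"
    by (rule sum.reindex_bij_betw[OF bij_upd[OF a ps], symmetric])
  also have "\<dots> = (\<Sum>d\<in>idx (length ps) N. f (X (sel ps a) d) (Y (upd a ps d)))"
  proof (intro sum.cong refl)
    fix d assume "d \<in> idx (length ps) N"
    then show "f (X (sel ps a) (sel ps (upd a ps d))) (Y (upd a ps d)) = f (X (sel ps a) d) (Y (upd a ps d))"
    proof -
      have h1: "distinct ps" "0 \<notin> set ps" using ps unfolding okp_def by auto
      have h2: "\<forall>p\<in>set ps. p \<le> length a" using ps a unfolding okp_def by auto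
      have h3: "length d = length ps" using \<open>d \<in> idx (length ps) N\<close> by simp
      show ?thesis using sel_upd[OF h1 h2 h3] by simp
    qed
  qed
  finally show ?thesis .
qed

lemma sum_emb_right:
  fixes f :: "'c \<Rightarrow> 'a::zero \<Rightarrow> 'd::comm_monoid_add"
  assumes b: "b \<in> idx m N" and ps: "okp m ps" and f0: "\<And>y. f y 0 = 0"
  shows "(\<Sum>c\<in>idx m N. f (Y c) (emb ps X c b)) = (\<Sum>d\<in>idx (length ps) N. f (Y (upd b ps d)) (X d (sel ps b)))"
proof -
  let ?T = "{c\<in>idx m N. \<forall>i<length b. Suc i \<notin> set ps \<longrightarrow> b ! i = c ! i}"
  have lb: "length b = m" using b by simp
  have "(\<Sum>c\<in>idx m N. f (Y c) (emb ps X c b)) = (\<Sum>c\<in>?T. f (Y c) (emb ps X c b))"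
  proof (rule sum.mono_neutral_right)
    show "\<forall>c\<in>idx m N - ?T. f (Y c) (emb ps X c b) = 0"
    proof
      fix c assume c: "c \<in> idx m N - ?T"
      then obtain i where i: "i < m" "Suc i \<notin> set ps" "b ! i \<noteq> c ! i" using lb by auto
      have "c \<in> idx m N" using c by blast
      then have lc: "length c = m" by simp
      have "emb ps X c b = 0" unfolding emb_sel using i lc by (metis (no_types, lifting))
      then show "f (Y c) (emb ps X c b) = 0" by (simp add: f0)
    qed
  qed auto
  also have "\<dots> = (\<Sum>c\<in>?T. f (Y c) (X (sel ps c) (sel ps b)))"
  proof (rule sum.cong[OF refl])
    fix c assume c: "c \<in> ?T"
    then have "\<forall>i<length c. Suc i \<notin> set ps \<longrightarrow> c ! i = b ! i" using lb by auto
    then show "f (Y c) (emb ps X c b) = f (Y c) (X (sel ps c) (sel ps b))" by (simp add: emb_sel)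
  qed
  also have "\<dots> = (\<Sum>d\<in>idx (length ps) N. f (Y (upd b ps d)) (X (sel ps (upd b ps d)) (sel ps b)))"
    by (rule sum.reindex_bij_betw[OF bij_upd[OF b ps], symmetric])
  also have "\<dots> = (\<Sum>d\<in>idx (length ps) N. f (Y (upd b ps d)) (X d (sel ps b)))"
  proof (intro sum.cong refl)
    fix d assume "d \<in> idx (length ps) N"
    then show "f (Y (upd b ps d)) (X (sel ps (upd b ps d)) (sel ps b)) = f (Y (upd b ps d)) (X d (sel ps b))"
    proof -
      have h1: "distinct ps" "0 \<notin> set ps" using ps unfolding okp_def by auto
      have h2: "\<forall>p\<in>set ps. p \<le> length b" using ps b unfolding okp_def by auto
      have h3: "length d = length ps" using \<open>d \<in> idx (length ps) N\<close> by simp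
      show ?thesis using sel_upd[OF h1 h2 h3] by simp
    qed
  qed
  finally show ?thesis .
qed


definition gm :: "('x \<Rightarrow> 'y \<Rightarrow> 'z::comm_monoid_add) \<Rightarrow> nat \<Rightarrow> nat \<Rightarrow> 'x op \<Rightarrow> 'y op \<Rightarrow> 'z op" where
  "gm f N m X Y a b = (\<Sum>c\<in>idx m N. f (X a c) (Y c b))"

lemma mmul_gm: "mmul N m X Y = gm (*) N m X Y"
  by (simp add: fun_eq_iff mmul_def gm_def)
lemma lsmul_gm: "lsmul sm N m C X = gm sm N m C X"
  by (simp add: fun_eq_iff lsmul_def gm_def)
lemma rsmul_gm: "rsmul sm N m X C = gm (\<lambda>x c. sm c x) N m X C"
  by (simp add: fun_eq_iff rsmul_def gm_def)

lemma emb_cond_upd: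
  assumes "okp m ps" "length a = m"
  shows "(\<forall>i<length (upd a ps d). Suc i \<notin> set ps \<longrightarrow> upd a ps d ! i = b ! i)
     = (\<forall>i<length a. Suc i \<notin> set ps \<longrightarrow> a ! i = b ! i)"
proof -
  have "0 \<notin> set ps" using assms(1) by (auto simp: okp_def)
  then show ?thesis using assms by (auto simp: upd_nth_out)
qed

lemma emb_gm:
  assumes ps: "okp m ps" and a: "a \<in> idx m N" and b: "b \<in> idx m N"
    and f1: "\<And>y. f 0 y = 0" and f2: "\<And>x. f x 0 = 0"
  shows "gm f N m (emb ps X) (emb ps Y) a b = emb ps (gm f N (length ps) X Y) a b"
proof -
  have la: "length a = m" using a by simp
  have "gm f N m (emb ps X) (emb ps Y) a b
      = (\<Sum>d\<in>idx (length ps) N. f (X (sel ps a) d) (emb ps Y (upd a ps d) b))"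
    unfolding gm_def using a ps f1 by (rule sum_emb_left)
  also have "\<dots> = (\<Sum>d\<in>idx (length ps) N. if (\<forall>i<length a. Suc i \<notin> set ps \<longrightarrow> a ! i = b ! i)
        then f (X (sel ps a) d) (Y d (sel ps b)) else 0)"
  proof (rule sum.cong[OF refl])
    fix d assume d: "d \<in> idx (length ps) N"
    have h1: "distinct ps" "0 \<notin> set ps" using ps unfolding okp_def by auto
    have h2: "\<forall>p\<in>set ps. p \<le> length a" using ps la unfolding okp_def by auto
    have h3: "length d = length ps" using d by simp
    show "f (X (sel ps a) d) (emb ps Y (upd a ps d) b) = (if (\<forall>i<length a. Suc i \<notin> set ps \<longrightarrow> a ! i = b ! i)
        then f (X (sel ps a) d) (Y d (sel ps b)) else 0)"
      unfolding emb_sel[of ps Y] emb_cond_upd[OF ps la] sel_upd[OF h1 h2 h3] by (auto simp: f2)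
  qed
  also have "\<dots> = emb ps (gm f N (length ps) X Y) a b"
  proof (cases "\<forall>i<length a. Suc i \<notin> set ps \<longrightarrow> a ! i = b ! i")
    case True then show ?thesis by (simp only: emb_sel gm_def if_P[OF True])
  next
    case False then show ?thesis by (simp only: emb_sel gm_def if_not_P[OF False] if_False sum.neutral_const)
  qed
  finally show ?thesis .
qed

lemma emb_mmul: "okp m ps \<Longrightarrow> opeq N m (mmul N m (emb ps X) (emb ps Y)) (emb ps (mmul N (length ps) X Y))"
  unfolding opeq_def mmul_gm by (auto intro!: emb_gm)

lemma sel_sel: assumes "set qs \<subseteq> {1..length ps}"
  shows "sel qs (sel ps a) = sel (map (\<lambda>j. ps ! (j - 1)) qs) a"
proof -
  have "j - 1 < length ps" if "j \<in> set qs" for j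
  proof -
    have "j \<in> {1..length ps}" using that assms by blast
    then show ?thesis by auto
  qed
  then show ?thesis unfolding sel_def by simp
qed

lemma emb_emb:
  assumes ps: "okp m ps" and qs: "set qs \<subseteq> {1..length ps}" and la: "length a = m" and lb: "length b = m"
  shows "emb ps (emb qs X) a b = emb (map (\<lambda>j. ps ! (j - 1)) qs) X a b"
proof -
  let ?pq = "map (\<lambda>j. ps ! (j - 1)) qs"
  have "((\<forall>i<length a. Suc i \<notin> set ps \<longrightarrow> a ! i = b ! i) \<and>
        (\<forall>i<length (sel ps a). Suc i \<notin> set qs \<longrightarrow> sel ps a ! i = sel ps b ! i))
      = (\<forall>i<length a. Suc i \<notin> set ?pq \<longrightarrow> a ! i = b ! i)" (is "?L = ?R")
  proof
    assume L: ?L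
    show ?R
    proof (intro allI impI)
      fix i assume i: "i < length a" "Suc i \<notin> set ?pq"
      show "a ! i = b ! i"
      proof (cases "Suc i \<in> set ps")
        case False then show ?thesis using L i by auto
      next
        case True
        then obtain j where j: "j < length ps" "ps ! j = Suc i" by (auto simp: in_set_conv_nth)
        have "Suc j \<notin> set qs"
        proof
          assume "Suc j \<in> set qs"
          then have "ps ! (Suc j - 1) \<in> set ?pq" by force
          then show False using i j by simp
        qed
        then have "sel ps a ! j = sel ps b ! j" using L j by auto
        then show ?thesis using j by (simp add: sel_def)
      qed
    qed
  next
    assume R: ?R
    have "set ?pq \<subseteq> set ps"
    proof
      fix x assume "x \<in> set ?pq"
      then obtain j where "j \<in> set qs" "x = ps ! (j - 1)" by auto
      then show "x \<in> set ps" using qs by (force simp: Suc_le_eq)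
    qed
    then have 1: "\<forall>i<length a. Suc i \<notin> set ps \<longrightarrow> a ! i = b ! i" using R by blast
    have 2: "\<forall>i<length (sel ps a). Suc i \<notin> set qs \<longrightarrow> sel ps a ! i = sel ps b ! i"
    proof (intro allI impI)
      fix i assume i: "i < length (sel ps a)" "Suc i \<notin> set qs"
      have ip: "i < length ps" using i by simp
      have pi: "ps ! i \<in> set ps" using ip by simp
      then have pi1: "ps ! i \<ge> 1" "ps ! i \<le> m" using ps by (auto simp: okp_def)
      have "ps ! i \<notin> set ?pq"
      proof
        assume "ps ! i \<in> set ?pq"
        then obtain j where j: "j \<in> set qs" "ps ! i = ps ! (j - 1)" by auto
        have "j \<in> {1..length ps}" using j qs by blast
        then have "j - 1 < length ps" "j \<ge> 1" by auto
        then have "i = j - 1" using j ip ps by (auto simp: okp_def nth_eq_iff_index_eq)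
        then show False using j i \<open>j \<ge> 1\<close> by auto
      qed
      then have "a ! (ps ! i - 1) = b ! (ps ! i - 1)" using R pi1 la by (auto dest!: spec[of _ "ps ! i - 1"])
      then show "sel ps a ! i = sel ps b ! i" using ip by (simp add: sel_def)
    qed
    show ?L using 1 2 by blast
  qed
  then show ?thesis
    by (simp only: emb_sel[of ps] emb_sel[of qs] emb_sel[of ?pq] sel_sel[OF qs] if_if_eq_conj)
qed

lemma sel_full: "length a = m \<Longrightarrow> sel [1..<Suc m] a = a"
  unfolding sel_def by (rule nth_equalityI) (simp_all del: upt_Suc)

lemma emb_full:
  assumes "length a = m" "length b = m"
  shows "emb [1..<Suc m] X a b = X a b"
  using assms sel_full[of a m] sel_full[of b m] by (simp add: emb_sel del: upt_Suc)

lemma emb_idop: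
  assumes ps: "set ps \<subseteq> {1..m}" and la: "length a = m" and lb: "length b = m"
  shows "emb ps idop a b = idop a b"
proof -
  have "((\<forall>i<length a. Suc i \<notin> set ps \<longrightarrow> a ! i = b ! i) \<and> sel ps a = sel ps b) = (a = b)"
  proof
    assume H: "(\<forall>i<length a. Suc i \<notin> set ps \<longrightarrow> a ! i = b ! i) \<and> sel ps a = sel ps b"
    show "a = b"
    proof (rule nth_equalityI)
      show "length a = length b" using la lb by simp
      fix i assume i: "i < length a"
      show "a ! i = b ! i"
      proof (cases "Suc i \<in> set ps")
        case True
        then obtain j where j: "j < length ps" "ps ! j = Suc i" by (auto simp: in_set_conv_nth)
        have "sel ps a ! j = sel ps b ! j" using H by simp
        then show ?thesis using j by (simp add: sel_def)
      qed (use H i in auto)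
    qed
  qed auto
  then show ?thesis by (auto simp: emb_sel idop_def)
qed

lemma emb_opeq:
  assumes "opeq N (length ps) X Y" "set ps \<subseteq> {1..m}"
  shows "opeq N m (emb ps X) (emb ps Y)"
  unfolding opeq_def
proof (intro ballI)
  fix a b assume a: "a \<in> idx m N" and b: "b \<in> idx m N"
  have "sel ps a \<in> idx (length ps) N" "sel ps b \<in> idx (length ps) N"
    using sel_idx[OF a assms(2)] sel_idx[OF b assms(2)] by auto
  then show "emb ps X a b = emb ps Y a b" using assms(1) by (auto simp: emb_sel opeq_def)
qed

lemma emb_collapse:
  assumes ps: "okp m ps" and qs: "okp m qs" and dj: "set ps \<inter> set qs = {}"
    and a: "a \<in> idx m N" and b: "b \<in> idx m N"
    and f1: "\<And>y. f 0 y = 0" and f2: "\<And>x. f x 0 = 0"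
  shows "gm f N m (emb ps X) (emb qs Y) a b =
     (if \<forall>i<m. Suc i \<notin> set ps \<union> set qs \<longrightarrow> a ! i = b ! i
      then f (X (sel ps a) (sel ps b)) (Y (sel qs a) (sel qs b)) else 0)"
proof -
  have la: "length a = m" and lb: "length b = m" using a b by auto
  have h1: "distinct ps" "0 \<notin> set ps" using ps unfolding okp_def by auto
  have h1q: "0 \<notin> set qs" using qs unfolding okp_def by auto
  have h2: "\<forall>p\<in>set ps. p \<le> length a" using ps la unfolding okp_def by auto
  let ?C = "\<forall>i<m. Suc i \<notin> set ps \<union> set qs \<longrightarrow> a ! i = b ! i"
  have "gm f N m (emb ps X) (emb qs Y) a b
      = (\<Sum>d\<in>idx (length ps) N. f (X (sel ps a) d) (emb qs Y (upd a ps d) b))"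
    unfolding gm_def using a ps f1 by (rule sum_emb_left)
  also have "\<dots> = (\<Sum>d\<in>idx (length ps) N. if d = sel ps b then
       (if ?C then f (X (sel ps a) d) (Y (sel qs a) (sel qs b)) else 0) else 0)"
  proof (rule sum.cong[OF refl])
    fix d assume d: "d \<in> idx (length ps) N"
    have h3: "length d = length ps" using d by simp
    have sq: "sel qs (upd a ps d) = sel qs a"
      unfolding sel_def
    proof (rule map_cong[OF refl])
      fix p assume p: "p \<in> set qs"
      then have "p \<notin> set ps" "p \<noteq> 0" using dj h1q by auto
      then have "Suc (p - 1) \<notin> set ps" by simp
      then show "upd a ps d ! (p - 1) = a ! (p - 1)" by (rule upd_nth_out[OF _ h1(2)])
    qed
    have cond: "(\<forall>i<length (upd a ps d). Suc i \<notin> set qs \<longrightarrow> upd a ps d ! i = b ! i)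
        = (d = sel ps b \<and> ?C)"
    proof
      assume H: "\<forall>i<length (upd a ps d). Suc i \<notin> set qs \<longrightarrow> upd a ps d ! i = b ! i"
      have "sel ps (upd a ps d) = sel ps b"
        unfolding sel_def
      proof (rule map_cong[OF refl])
        fix p assume p: "p \<in> set ps"
        then have "p \<notin> set qs" "p \<ge> 1" "p \<le> m" using dj ps by (auto simp: okp_def)
        then show "upd a ps d ! (p - 1) = b ! (p - 1)" using H la by auto
      qed
      then have "d = sel ps b" using sel_upd[OF h1 h2 h3] by simp
      moreover have ?C
      proof (intro allI impI)
        fix i assume i: "i < m" "Suc i \<notin> set ps \<union> set qs"
        then have "upd a ps d ! i = a ! i" using h1 by (intro upd_nth_out) auto
        moreover have "upd a ps d ! i = b ! i" using H i la by auto
        ultimately show "a ! i = b ! i" by simp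
      qed
      ultimately show "d = sel ps b \<and> ?C" by blast
    next
      assume H: "d = sel ps b \<and> ?C"
      show "\<forall>i<length (upd a ps d). Suc i \<notin> set qs \<longrightarrow> upd a ps d ! i = b ! i"
      proof (intro allI impI)
        fix i assume i: "i < length (upd a ps d)" "Suc i \<notin> set qs"
        show "upd a ps d ! i = b ! i"
        proof (cases "Suc i \<in> set ps")
          case True
          have "upd a ps (sel ps b) ! i = b ! i" using True i by (intro upd_sel_nth) auto
          then show ?thesis using H by simp
        next
          case False
          have "upd a ps d ! i = a ! i" by (rule upd_nth_out[OF False h1(2)])
          moreover have "a ! i = b ! i" using H i la False by auto
          ultimately show ?thesis by simp
        qed
      qed
    qed
    show "f (X (sel ps a) d) (emb qs Y (upd a ps d) b) = (if d = sel ps b then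
       (if ?C then f (X (sel ps a) d) (Y (sel qs a) (sel qs b)) else 0) else 0)"
      unfolding emb_sel[of qs Y] cond sq by (auto simp: f2)
  qed
  also have "\<dots> = (if ?C then f (X (sel ps a) (sel ps b)) (Y (sel qs a) (sel qs b)) else 0)"
  proof -
    have "sel ps b \<in> idx (length ps) N" using sel_idx[OF b] ps by (simp add: okp_def)
    then show ?thesis by (simp add: sum.delta)
  qed
  finally show ?thesis .
qed


lemma opeq_refl[simp, intro]: "opeq N m X X" by (simp add: opeq_def)
lemma opeq_sym: "opeq N m X Y \<Longrightarrow> opeq N m Y X" by (simp add: opeq_def)
lemma opeq_trans[trans]: "opeq N m X Y \<Longrightarrow> opeq N m Y Z \<Longrightarrow> opeq N m X Z" by (simp add: opeq_def)
lemma opeqD: "opeq N m X Y \<Longrightarrow> a \<in> idx m N \<Longrightarrow> b \<in> idx m N \<Longrightarrow> X a b = Y a b" by (simp add: opeq_def)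

lemma opeq_add: "opeq N m X X' \<Longrightarrow> opeq N m Y Y' \<Longrightarrow> opeq N m (\<lambda>a b. X a b + Y a b) (\<lambda>a b. X' a b + Y' a b)"
  by (simp add: opeq_def)
lemma opeq_diff: "opeq N m X X' \<Longrightarrow> opeq N m Y Y' \<Longrightarrow> opeq N m (\<lambda>a b. X a b - Y a b) (\<lambda>a b. X' a b - Y' a b)"
  by (simp add: opeq_def)
lemma opeq_scal: "opeq N m X X' \<Longrightarrow> opeq N m (\<lambda>a b. c * X a b) (\<lambda>a b. c * X' a b)"
  by (simp add: opeq_def)
lemma opeq_gscal: "opeq N m X X' \<Longrightarrow> opeq N m (\<lambda>a b. f (X a b)) (\<lambda>a b. f (X' a b))"
  by (simp add: opeq_def)

lemma mmul_assoc: "mmul N m (mmul N m X Y) Z = mmul N m X (mmul N m Y (Z :: 'a::semiring_0 op))"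
  unfolding mmul_def fun_eq_iff
  by (simp add: sum_distrib_left sum_distrib_right mult.assoc) (rule allI, rule allI, rule sum.swap)

lemma mmul_cong: "opeq N m X X' \<Longrightarrow> opeq N m Y Y' \<Longrightarrow> opeq N m (mmul N m X Y) (mmul N m X' (Y' :: 'a::semiring_0 op))"
  unfolding opeq_def mmul_def by simp

lemma mmul_idop_l: "opeq N m (mmul N m idop X) (X :: 'a::semiring_1 op)"
proof -
  have "\<And>a b c. idop a c * X c b = (if a = c then X c b else 0)" by (simp add: idop_def)
  then show ?thesis unfolding opeq_def mmul_def by (simp add: sum.delta)
qed

lemma mmul_idop_r: "opeq N m (mmul N m X idop) (X :: 'a::semiring_1 op)"
proof -
  have "\<And>a b c. X a c * idop c b = (if c = b then X a c else 0)" by (simp add: idop_def)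
  then show ?thesis unfolding opeq_def mmul_def by (simp add: sum.delta')
qed

lemma mmul_zero_l[simp]: "mmul N m (\<lambda>a b. 0) X = (\<lambda>a b. (0::'a::semiring_0))"
  by (simp add: mmul_def fun_eq_iff)
lemma mmul_zero_r[simp]: "mmul N m X (\<lambda>a b. 0) = (\<lambda>a b. (0::'a::semiring_0))"
  by (simp add: mmul_def fun_eq_iff)

lemma mmul_add_l: "mmul N m (\<lambda>a b. X a b + Y a b) Z = (\<lambda>a b. mmul N m X Z a b + mmul N m Y Z a b :: 'a::semiring_0)"
  by (simp add: mmul_def fun_eq_iff distrib_right sum.distrib)
lemma mmul_add_r: "mmul N m Z (\<lambda>a b. X a b + Y a b) = (\<lambda>a b. mmul N m Z X a b + mmul N m Z Y a b :: 'a::semiring_0)"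
  by (simp add: mmul_def fun_eq_iff distrib_left sum.distrib)
lemma mmul_diff_l: "mmul N m (\<lambda>a b. X a b - Y a b) Z = (\<lambda>a b. mmul N m X Z a b - mmul N m Y Z a b :: 'a::ring)"
  by (simp add: mmul_def fun_eq_iff left_diff_distrib sum_subtractf)
lemma mmul_diff_r: "mmul N m Z (\<lambda>a b. X a b - Y a b) = (\<lambda>a b. mmul N m Z X a b - mmul N m Z Y a b :: 'a::ring)"
  by (simp add: mmul_def fun_eq_iff right_diff_distrib sum_subtractf)
lemma mmul_scal_l: "mmul N m (\<lambda>a b. c * X a b) Z = (\<lambda>a b. c * mmul N m X Z a b :: complex)"
  by (simp add: mmul_def fun_eq_iff sum_distrib_left mult.assoc)
lemma mmul_scal_r: "mmul N m Z (\<lambda>a b. c * X a b) = (\<lambda>a b. c * mmul N m Z X a b :: complex)"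
  by (simp add: mmul_def fun_eq_iff sum_distrib_left mult.left_commute)

lemma mm_comm_emb:
  assumes "okp m ps" "okp m qs" "set ps \<inter> set qs = {}"
  shows "opeq N m (mmul N m (emb ps X) (emb qs Y)) (mmul N m (emb qs Y) (emb ps (X :: complex op)))"
  unfolding opeq_def mmul_gm
proof (intro ballI)
  fix a b assume a: "a \<in> idx m N" and b: "b \<in> idx m N"
  have dj: "set qs \<inter> set ps = {}" using assms(3) by blast
  have e1: "gm (*) N m (emb ps X) (emb qs Y) a b = (if \<forall>i<m. Suc i \<notin> set ps \<union> set qs \<longrightarrow> a ! i = b ! i
      then X (sel ps a) (sel ps b) * Y (sel qs a) (sel qs b) else 0)"
    by (rule emb_collapse[OF assms(1,2,3) a b]) simp_all
  have e2: "gm (*) N m (emb qs Y) (emb ps X) a b = (if \<forall>i<m. Suc i \<notin> set qs \<union> set ps \<longrightarrow> a ! i = b ! i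
      then Y (sel qs a) (sel qs b) * X (sel ps a) (sel ps b) else 0)"
    by (rule emb_collapse[OF assms(2,1) dj a b]) simp_all
  show "gm (*) N m (emb ps X) (emb qs Y) a b = gm (*) N m (emb qs Y) (emb ps X) a b"
    by (simp only: e1 e2 Un_commute[of "set qs"] mult.commute[of "Y _ _"])
qed

locale cmod =
  fixes sm :: "complex \<Rightarrow> 'b::ab_group_add \<Rightarrow> 'b"
  assumes sm_add_r: "sm c (x + y) = sm c x + sm c y"
    and sm_add_l: "sm (c + d) x = sm c x + sm d x"
    and sm_mult: "sm (c * d) x = sm c (sm d x)"
    and sm_one: "sm 1 x = x"
begin

lemma sm_zero_r[simp]: "sm c 0 = 0"
  using sm_add_r[of c 0 0] by simp
lemma sm_zero_l[simp]: "sm 0 x = 0"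
  using sm_add_l[of 0 0 x] by simp
lemma sm_minus_r: "sm c (- x) = - sm c x"
proof -
  have "sm c x + sm c (- x) = 0" using sm_add_r[of c x "- x"] by simp
  then show ?thesis by (metis add.inverse_unique)
qed
lemma sm_diff_r: "sm c (x - y) = sm c x - sm c y"
  using sm_add_r[of c x "- y"] by (simp add: sm_minus_r)
lemma sm_minus_l: "sm (- c) x = - sm c x"
proof -
  have "sm c x + sm (- c) x = 0" using sm_add_l[of c "- c" x] by simp
  then show ?thesis by (metis add.inverse_unique)
qed
lemma sm_diff_l: "sm (c - d) x = sm c x - sm d x"
  using sm_add_l[of c "- d" x] by (simp add: sm_minus_l)
lemma sm_sum_r: "sm c (\<Sum>i\<in>A. f i) = (\<Sum>i\<in>A. sm c (f i))"
  by (induction A rule: infinite_finite_induct) (simp_all add: sm_add_r)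
lemma sm_sum_l: "sm (\<Sum>i\<in>A. g i) x = (\<Sum>i\<in>A. sm (g i) x)"
  by (induction A rule: infinite_finite_induct) (simp_all add: sm_add_l)

lemma lsmul_lsmul: "lsmul sm N m C (lsmul sm N m D X) = lsmul sm N m (mmul N m C D) X"
  unfolding lsmul_def mmul_def fun_eq_iff
  by (simp add: sm_sum_r sm_sum_l sm_mult) (rule allI, rule allI, rule sum.swap)

lemma rsmul_rsmul: "rsmul sm N m (rsmul sm N m X C) D = rsmul sm N m X (mmul N m C D)"
  unfolding rsmul_def mmul_def fun_eq_iff
  by (simp add: sm_sum_r sm_sum_l sm_mult[symmetric] mult.commute) (rule allI, rule allI, rule sum.swap)

lemma lsmul_rsmul: "lsmul sm N m C (rsmul sm N m X D) = rsmul sm N m (lsmul sm N m C X) D"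
  unfolding rsmul_def lsmul_def fun_eq_iff
  by (simp add: sm_sum_r sm_mult[symmetric] mult.commute) (rule allI, rule allI, rule sum.swap)

lemma lsmul_cong: "opeq N m C C' \<Longrightarrow> opeq N m X X' \<Longrightarrow> opeq N m (lsmul sm N m C X) (lsmul sm N m C' X')"
  unfolding opeq_def lsmul_def by simp
lemma rsmul_cong: "opeq N m X X' \<Longrightarrow> opeq N m C C' \<Longrightarrow> opeq N m (rsmul sm N m X C) (rsmul sm N m X' C')"
  unfolding opeq_def rsmul_def by simp

lemma lsmul_idop: "opeq N m (lsmul sm N m idop X) X"
proof -
  have "\<And>a b c. sm (idop a c) (X c b) = (if a = c then X c b else 0)" by (simp add: idop_def sm_one)
  then show ?thesis unfolding opeq_def lsmul_def by (simp add: sum.delta)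
qed
lemma rsmul_idop: "opeq N m (rsmul sm N m X idop) X"
proof -
  have "\<And>a b c. sm (idop c b) (X a c) = (if c = b then X a c else 0)" by (simp add: idop_def sm_one)
  then show ?thesis unfolding opeq_def rsmul_def by (simp add: sum.delta')
qed

lemma lsmul_add_o: "lsmul sm N m (\<lambda>a b. C a b + D a b) X = (\<lambda>a b. lsmul sm N m C X a b + lsmul sm N m D X a b)"
  by (simp add: lsmul_def fun_eq_iff sm_add_l sum.distrib)
lemma lsmul_diff_o: "lsmul sm N m (\<lambda>a b. C a b - D a b) X = (\<lambda>a b. lsmul sm N m C X a b - lsmul sm N m D X a b)"
  by (simp add: lsmul_def fun_eq_iff sm_diff_l sum_subtractf)
lemma lsmul_scal_o: "lsmul sm N m (\<lambda>a b. c * C a b) X = (\<lambda>a b. sm c (lsmul sm N m C X a b))"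
  by (simp add: lsmul_def fun_eq_iff sm_mult sm_sum_r)
lemma lsmul_add_v: "lsmul sm N m C (\<lambda>a b. X a b + Y a b) = (\<lambda>a b. lsmul sm N m C X a b + lsmul sm N m C Y a b)"
  by (simp add: lsmul_def fun_eq_iff sm_add_r sum.distrib)
lemma lsmul_diff_v: "lsmul sm N m C (\<lambda>a b. X a b - Y a b) = (\<lambda>a b. lsmul sm N m C X a b - lsmul sm N m C Y a b)"
  by (simp add: lsmul_def fun_eq_iff sm_diff_r sum_subtractf)
lemma lsmul_scal_v: "lsmul sm N m C (\<lambda>a b. sm c (X a b)) = (\<lambda>a b. sm c (lsmul sm N m C X a b))"
  by (simp add: lsmul_def fun_eq_iff sm_mult[symmetric] sm_sum_r mult.commute)
lemma lsmul_zero_v[simp]: "lsmul sm N m C (\<lambda>a b. 0) = (\<lambda>a b. 0)"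
  by (simp add: lsmul_def fun_eq_iff)

lemma rsmul_add_o: "rsmul sm N m X (\<lambda>a b. C a b + D a b) = (\<lambda>a b. rsmul sm N m X C a b + rsmul sm N m X D a b)"
  by (simp add: rsmul_def fun_eq_iff sm_add_l sum.distrib)
lemma rsmul_diff_o: "rsmul sm N m X (\<lambda>a b. C a b - D a b) = (\<lambda>a b. rsmul sm N m X C a b - rsmul sm N m X D a b)"
  by (simp add: rsmul_def fun_eq_iff sm_diff_l sum_subtractf)
lemma rsmul_scal_o: "rsmul sm N m X (\<lambda>a b. c * C a b) = (\<lambda>a b. sm c (rsmul sm N m X C a b))"
  by (simp add: rsmul_def fun_eq_iff sm_mult sm_sum_r)
lemma rsmul_add_v: "rsmul sm N m (\<lambda>a b. X a b + Y a b) C = (\<lambda>a b. rsmul sm N m X C a b + rsmul sm N m Y C a b)"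
  by (simp add: rsmul_def fun_eq_iff sm_add_r sum.distrib)
lemma rsmul_scal_v: "rsmul sm N m (\<lambda>a b. sm c (X a b)) C = (\<lambda>a b. sm c (rsmul sm N m X C a b))"
  by (simp add: rsmul_def fun_eq_iff sm_mult[symmetric] sm_sum_r mult.commute)
lemma rsmul_zero_v[simp]: "rsmul sm N m (\<lambda>a b. 0) C = (\<lambda>a b. 0)"
  by (simp add: rsmul_def fun_eq_iff)

lemma emb_lsmul: "okp m ps \<Longrightarrow>
   opeq N m (lsmul sm N m (emb ps C) (emb ps X)) (emb ps (lsmul sm N (length ps) C X))"
  unfolding opeq_def lsmul_gm by (auto intro!: emb_gm)

lemma emb_rsmul: "okp m ps \<Longrightarrow>
   opeq N m (rsmul sm N m (emb ps X) (emb ps C)) (emb ps (rsmul sm N (length ps) X C))"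
  unfolding opeq_def rsmul_gm by (auto intro!: emb_gm)

lemma ls_comm_emb:
  assumes "okp m ps" "okp m qs" "set ps \<inter> set qs = {}"
  shows "opeq N m (lsmul sm N m (emb ps C) (emb qs X)) (rsmul sm N m (emb qs X) (emb ps C))"
  unfolding opeq_def lsmul_gm rsmul_gm
proof (intro ballI)
  fix a b assume a: "a \<in> idx m N" and b: "b \<in> idx m N"
  have dj: "set qs \<inter> set ps = {}" using assms(3) by blast
  have e1: "gm sm N m (emb ps C) (emb qs X) a b = (if \<forall>i<m. Suc i \<notin> set ps \<union> set qs \<longrightarrow> a ! i = b ! i
      then sm (C (sel ps a) (sel ps b)) (X (sel qs a) (sel qs b)) else 0)"
    by (rule emb_collapse[OF assms(1,2,3) a b]) simp_all
  have e2: "gm (\<lambda>x c. sm c x) N m (emb qs X) (emb ps C) a b = (if \<forall>i<m. Suc i \<notin> set qs \<union> set ps \<longrightarrow> a ! i = b ! i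
      then sm (C (sel ps a) (sel ps b)) (X (sel qs a) (sel qs b)) else 0)"
    by (rule emb_collapse[OF assms(2,1) dj a b]) simp_all
  show "gm sm N m (emb ps C) (emb qs X) a b = gm (\<lambda>x c. sm c x) N m (emb qs X) (emb ps C) a b"
    by (simp only: e1 e2 Un_commute[of "set qs"])
qed

definition sapp :: "nat \<Rightarrow> nat \<Rightarrow> complex op \<Rightarrow> (nat list \<Rightarrow> 'b) \<Rightarrow> nat list \<Rightarrow> 'b" where
  "sapp N m C w = (\<lambda>a. if a \<in> idx m N then \<Sum>b\<in>idx m N. sm (C a b) (w b) else 0)"

definition nrm :: "nat \<Rightarrow> nat \<Rightarrow> (nat list \<Rightarrow> 'b) \<Rightarrow> bool" where
  "nrm N m w \<longleftrightarrow> (\<forall>a. a \<notin> idx m N \<longrightarrow> w a = 0)"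

lemma sapp_nrm[simp]: "nrm N m (sapp N m C w)"
  by (simp add: nrm_def sapp_def)

lemma sapp_mmul: "sapp N m (mmul N m C D) w = sapp N m C (sapp N m D w)"
  unfolding sapp_def mmul_def fun_eq_iff
  by (simp add: sm_sum_r sm_sum_l sm_mult) (intro allI impI, rule sum.swap)

lemma sapp_opeq: "opeq N m C D \<Longrightarrow> sapp N m C w = sapp N m D w"
  unfolding sapp_def opeq_def fun_eq_iff by simp

lemma sapp_cong: "(\<And>a. a \<in> idx m N \<Longrightarrow> v a = w a) \<Longrightarrow> sapp N m C v = sapp N m C w"
  unfolding sapp_def fun_eq_iff by simp

lemma sapp_add_v: "sapp N m C (\<lambda>a. v a + w a) = (\<lambda>a. sapp N m C v a + sapp N m C w a)"
  by (simp add: sapp_def fun_eq_iff sm_add_r sum.distrib)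
lemma sapp_diff_v: "sapp N m C (\<lambda>a. v a - w a) = (\<lambda>a. sapp N m C v a - sapp N m C w a)"
  by (simp add: sapp_def fun_eq_iff sm_diff_r sum_subtractf)
lemma sapp_scal_v: "sapp N m C (\<lambda>a. sm c (v a)) = (\<lambda>a. sm c (sapp N m C v a))"
  by (simp add: sapp_def fun_eq_iff sm_mult[symmetric] sm_sum_r mult.commute)
lemma sapp_zero_v[simp]: "sapp N m C (\<lambda>a. 0) = (\<lambda>a. 0)"
  by (simp add: sapp_def fun_eq_iff)
lemma sapp_add_o: "sapp N m (\<lambda>a b. C a b + D a b) w = (\<lambda>a. sapp N m C w a + sapp N m D w a)"
  by (simp add: sapp_def fun_eq_iff sm_add_l sum.distrib)
lemma sapp_diff_o: "sapp N m (\<lambda>a b. C a b - D a b) w = (\<lambda>a. sapp N m C w a - sapp N m D w a)"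
  by (simp add: sapp_def fun_eq_iff sm_diff_l sum_subtractf)
lemma sapp_scal_o: "sapp N m (\<lambda>a b. c * C a b) w = (\<lambda>a. sm c (sapp N m C w a))"
  by (simp add: sapp_def fun_eq_iff sm_mult sm_sum_r)
lemma sapp_idop: "nrm N m w \<Longrightarrow> sapp N m idop w = w"
proof -
  assume "nrm N m w"
  have "\<And>a c. sm (idop a c) (w c) = (if a = c then w c else 0)" by (simp add: idop_def sm_one)
  then show ?thesis using \<open>nrm N m w\<close> unfolding sapp_def nrm_def fun_eq_iff by (simp add: sum.delta)
qed

lemma lsmul_col: "a \<in> idx m N \<Longrightarrow> lsmul sm N m C X a b = sapp N m C (\<lambda>c. X c b) a"
  by (simp add: lsmul_def sapp_def)

end

interpretation cplx: cmod "(*) :: complex \<Rightarrow> complex \<Rightarrow> complex"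
  by unfold_locales (simp_all add: distrib_left distrib_right)

locale calgl = cmod sm for sm :: "complex \<Rightarrow> 'a::ring \<Rightarrow> 'a" +
  assumes sm_ml: "sm c (x * y) = sm c x * y"
    and sm_mr: "sm c (x * y) = x * sm c y"
begin

lemma mmul_lsmul: "mmul N m (lsmul sm N m C X) Y = lsmul sm N m C (mmul N m X Y)"
  unfolding mmul_def lsmul_def fun_eq_iff
  by (simp add: sum_distrib_right sm_sum_r sm_ml) (rule allI, rule allI, rule sum.swap)

lemma mmul_rsmul: "mmul N m X (rsmul sm N m Y C) = rsmul sm N m (mmul N m X Y) C"
  unfolding mmul_def rsmul_def fun_eq_iff
  by (simp add: sum_distrib_left sm_sum_r sm_mr) (rule allI, rule allI, rule sum.swap)

lemma mmul_rsmul_lsmul: "mmul N m (rsmul sm N m X C) Y = mmul N m X (lsmul sm N m C Y)"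
  unfolding mmul_def rsmul_def lsmul_def fun_eq_iff
  by (simp add: sum_distrib_left sum_distrib_right sm_ml[symmetric] sm_mr[symmetric]) (rule allI, rule allI, rule sum.swap)

lemma emb_mmul_a: "okp m ps \<Longrightarrow>
   opeq N m (mmul N m (emb ps X) (emb ps Y)) (emb ps (mmul N (length ps) X (Y :: 'a op)))"
  by (rule emb_mmul)

end

lemma calg_calgl: "calg sm \<Longrightarrow> calgl sm"
  unfolding calg_def calgl_def calgl_axioms_def cmod_def by metis


lemma okp2: "1 \<le> i \<Longrightarrow> Suc i \<le> m \<Longrightarrow> okp m [i, Suc i]"
  by (auto simp: okp_def)
lemma okp3: "1 \<le> i \<Longrightarrow> Suc (Suc i) \<le> m \<Longrightarrow> okp m [i, Suc i, Suc (Suc i)]"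
  by (auto simp: okp_def)

lemma emb3_12: "1 \<le> i \<Longrightarrow> Suc (Suc i) \<le> m \<Longrightarrow>
  opeq N m (emb [i, Suc i, Suc (Suc i)] (emb [1,2] X)) (emb [i, Suc i] X)"
  unfolding opeq_def by (auto simp: emb_emb[OF okp3])

lemma emb3_23: "1 \<le> i \<Longrightarrow> Suc (Suc i) \<le> m \<Longrightarrow>
  opeq N m (emb [i, Suc i, Suc (Suc i)] (emb [2,3] X)) (emb [Suc i, Suc (Suc i)] X)"
  unfolding opeq_def by (auto simp: emb_emb[OF okp3])

lemma emb3_prod:
  assumes "1 \<le> i" "Suc (Suc i) \<le> m"
  shows "opeq N m (emb [i, Suc i, Suc (Suc i)] (mmul N 3 (mmul N 3 A B) (C :: complex op)))
     (mmul N m (mmul N m (emb [i, Suc i, Suc (Suc i)] A) (emb [i, Suc i, Suc (Suc i)] B)) (emb [i, Suc i, Suc (Suc i)] C))"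
proof -
  let ?p = "[i, Suc i, Suc (Suc i)]"
  have ok: "okp m ?p" using assms by (rule okp3)
  have "opeq N m (emb ?p (mmul N 3 (mmul N 3 A B) C)) (mmul N m (emb ?p (mmul N 3 A B)) (emb ?p C))"
    using emb_mmul[OF ok, of N "mmul N 3 A B" C] by (simp add: opeq_sym numeral_3_eq_3)
  also have "opeq N m \<dots> (mmul N m (mmul N m (emb ?p A) (emb ?p B)) (emb ?p C))"
    using emb_mmul[OF ok, of N A B] by (intro mmul_cong) (simp_all add: opeq_sym numeral_3_eq_3)
  finally show ?thesis .
qed

lemma emb2_prod:
  assumes "1 \<le> i" "Suc i \<le> m"
  shows "opeq N m (emb [i, Suc i] (mmul N 2 A (B :: complex op)))
     (mmul N m (emb [i, Suc i] A) (emb [i, Suc i] B))"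
  using emb_mmul[OF okp2[OF assms], of N A B] by (simp add: opeq_sym numeral_2_eq_2)

lemma tr2: "opeq N 2 X Y \<Longrightarrow> 1 \<le> i \<Longrightarrow> Suc i \<le> m \<Longrightarrow> opeq N m (emb [i, Suc i] X) (emb [i, Suc i] Y)"
  using emb_opeq[of N "[i, Suc i]" X Y m] by (simp add: numeral_2_eq_2)

lemma tr3: "opeq N 3 X Y \<Longrightarrow> 1 \<le> i \<Longrightarrow> Suc (Suc i) \<le> m \<Longrightarrow>
   opeq N m (emb [i, Suc i, Suc (Suc i)] X) (emb [i, Suc i, Suc (Suc i)] Y)"
  using emb_opeq[of N "[i, Suc i, Suc (Suc i)]" X Y m] by (simp add: numeral_3_eq_3)

lemma emb_scal: "emb ps (\<lambda>a b. c * X a b) = (\<lambda>a b. c * emb ps X a b :: complex)"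
  by (auto simp: fun_eq_iff emb_def)
lemma emb_div: "emb ps (\<lambda>a b. X a b / c) = (\<lambda>a b. emb ps X a b / c :: complex)"
  by (auto simp: fun_eq_iff emb_def)
lemma emb_add: "emb ps (\<lambda>a b. X a b + Y a b) = (\<lambda>a b. emb ps X a b + emb ps Y a b :: complex)"
  by (auto simp: fun_eq_iff emb_def)
lemma emb_diff: "emb ps (\<lambda>a b. X a b - Y a b) = (\<lambda>a b. emb ps X a b - emb ps (Y :: complex op) a b)"
  by (auto simp: fun_eq_iff emb_def)
lemma emb_zero: "emb ps (\<lambda>a b. 0) = (\<lambda>a b. 0 :: 'z::zero)"
  by (auto simp: fun_eq_iff emb_def)
lemma emb_idop_opeq: "set ps \<subseteq> {1..m} \<Longrightarrow> opeq N m (emb ps idop) (idop :: complex op)"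
  unfolding opeq_def by (auto simp: emb_idop)

lemma qnum_0[simp]: "qnum 0 q = 0" by (simp add: qnum_def)
lemma qnum_1[simp]: "qnum 1 q = 1" by (simp add: qnum_def)
lemma qnum_Suc0[simp]: "qnum (Suc 0) q = 1" by (simp add: qnum_def)

lemma qnum_Suc: assumes "q \<noteq> 0" shows "qnum (Suc k) q = q ^ k + qnum k q / q"
proof -
  have "qnum (Suc k) q = (\<Sum>i<Suc k. q powi (int (Suc k) - 1 - 2 * int i))" by (simp add: qnum_def)
  also have "\<dots> = q powi (int k) + (\<Sum>i<k. q powi (int (Suc k) - 1 - 2 * int (Suc i)))"
    by (subst sum.lessThan_Suc_shift) simp
  also have "(\<Sum>i<k. q powi (int (Suc k) - 1 - 2 * int (Suc i))) = (\<Sum>i<k. q powi (int k - 1 - 2 * int i) / q)"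
  proof (rule sum.cong[OF refl])
    fix i
    have "int (Suc k) - 1 - 2 * int (Suc i) = (int k - 1 - 2 * int i) + (-1)" by simp
    then show "q powi (int (Suc k) - 1 - 2 * int (Suc i)) = q powi (int k - 1 - 2 * int i) / q"
      by (subst \<open>int (Suc k) - 1 - 2 * int (Suc i) = (int k - 1 - 2 * int i) + (-1)\<close>, subst power_int_add)
        (use assms in \<open>simp_all add: divide_inverse\<close>)
  qed
  also have "\<dots> = qnum k q / q" by (simp add: qnum_def sum_divide_distrib)
  finally show ?thesis by (simp add: power_int_of_nat)
qed

lemma qnum_2: "q \<noteq> 0 \<Longrightarrow> qnum 2 q = q + 1 / q"
  using qnum_Suc[of q 1] by (simp add: numeral_2_eq_2)


declare upt_Suc[simp del]

lemma emb_prod3: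
  assumes ok: "okp m P"
  shows "opeq N m (emb P (mmul N (length P) (mmul N (length P) A B) (C :: complex op)))
     (mmul N m (mmul N m (emb P A) (emb P B)) (emb P C))"
proof -
  have "opeq N m (emb P (mmul N (length P) (mmul N (length P) A B) C)) (mmul N m (emb P (mmul N (length P) A B)) (emb P C))"
    using emb_mmul[OF ok, of N "mmul N (length P) A B" C] by (simp add: opeq_sym)
  also have "opeq N m \<dots> (mmul N m (mmul N m (emb P A) (emb P B)) (emb P C))"
    using emb_mmul[OF ok, of N A B] by (intro mmul_cong) (simp_all add: opeq_sym)
  finally show ?thesis .
qed

lemma okp_prefix: "m' \<le> m \<Longrightarrow> okp m [1..<Suc m']"
  by (auto simp: okp_def)

lemma emb_emb_prefix:
  assumes "m' \<le> m" "set qs \<subseteq> {1..m'}"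
  shows "opeq N m (emb [1..<Suc m'] (emb qs X)) (emb qs X)"
proof -
  have "map (\<lambda>j. [1..<Suc m'] ! (j - 1)) qs = qs"
  proof (rule map_idI)
    fix j assume "j \<in> set qs"
    then have "1 \<le> j" "j \<le> m'" using assms by auto
    then show "[1..<Suc m'] ! (j - 1) = j" by (simp del: upt_Suc)
  qed
  moreover have qs': "set qs \<subseteq> {1..length [1..<Suc m']}" using assms by (simp del: upt_Suc)
  ultimately show ?thesis
  proof (unfold opeq_def, intro ballI)
    fix a b assume "map (\<lambda>j. [1..<Suc m'] ! (j - 1)) qs = qs" "a \<in> idx m N" "b \<in> idx m N"
    moreover have "length a = m" "length b = m" using calculation by auto
    ultimately show "emb [1..<Suc m'] (emb qs X) a b = emb qs X a b"
      using emb_emb[OF okp_prefix[OF assms(1)] qs', of a b X] by simp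
  qed
qed

locale hecke =
  fixes N n :: nat and q :: complex and R S2 A2 :: "complex op"
  assumes q0: "q \<noteq> 0" and n1: "1 \<le> n"
    and ii1: "qadm 2 q"
    and ii2: "opeq N 2 (mmul N 2 S2 S2) S2"
    and ii4: "opeq N 2 (\<lambda>a b. S2 a b + A2 a b) idop"
    and ii5: "opeq N 2 R (\<lambda>a b. q * S2 a b - inverse q * A2 a b)"
    and i1: "opeq N 3 (mmul N 3 (mmul N 3 (emb [1,2] R) (emb [2,3] R)) (emb [1,2] R))
                      (mmul N 3 (mmul N 3 (emb [2,3] R) (emb [1,2] R)) (emb [2,3] R))"
    and iii1: "qadm n q"
begin

abbreviation "Rn i \<equiv> emb [i, Suc i] R"
abbreviation "Sn i \<equiv> emb [i, Suc i] S2"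
abbreviation "An i \<equiv> emb [i, Suc i] A2"
abbreviation "Ek k \<equiv> emb [1..<Suc k] (asym N q R k)"
abbreviation "ap \<equiv> cplx.sapp N n"

lemma qnz: "1 \<le> k \<Longrightarrow> k \<le> n \<Longrightarrow> qnum k q \<noteq> 0"
  using iii1 by (auto simp: qadm_def)

lemma q2nz: "q + 1 / q \<noteq> 0"
  using ii1 qnum_2[OF q0] by (auto simp: qadm_def)

lemma A2_eq: "opeq N 2 A2 (\<lambda>a b. idop a b - S2 a b)"
  using ii4 by (simp add: opeq_def algebra_simps)

lemma S_vec: "1 \<le> i \<Longrightarrow> Suc i \<le> n \<Longrightarrow> ap (Sn i) (ap (Sn i) v) = ap (Sn i) v"
proof -
  assume i: "1 \<le> i" "Suc i \<le> n"
  have "opeq N n (mmul N n (Sn i) (Sn i)) (Sn i)"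
    using opeq_trans[OF opeq_sym[OF emb2_prod[OF i]] tr2[OF ii2 i]] .
  then show ?thesis by (metis cplx.sapp_mmul cplx.sapp_opeq)
qed

lemma A_vec: "1 \<le> i \<Longrightarrow> Suc i \<le> n \<Longrightarrow> cplx.nrm N n v \<Longrightarrow> ap (An i) v = (\<lambda>a. v a - ap (Sn i) v a)"
proof -
  assume i: "1 \<le> i" "Suc i \<le> n" and v: "cplx.nrm N n v"
  have "opeq N n (An i) (emb [i, Suc i] (\<lambda>a b. idop a b - S2 a b))" using tr2[OF A2_eq i] .
  also have "emb [i, Suc i] (\<lambda>a b. idop a b - S2 a b) = (\<lambda>a b. emb [i, Suc i] idop a b - Sn i a b)"
    by (rule emb_diff)
  also have "opeq N n \<dots> (\<lambda>a b. idop a b - Sn i a b)"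
    by (rule opeq_diff[OF emb_idop_opeq opeq_refl]) (use i in auto)
  finally have "ap (An i) v = ap (\<lambda>a b. idop a b - Sn i a b) v" by (rule cplx.sapp_opeq)
  then show ?thesis by (simp add: cplx.sapp_diff_o cplx.sapp_idop[OF v])
qed

lemma R_vec: "1 \<le> i \<Longrightarrow> Suc i \<le> n \<Longrightarrow> cplx.nrm N n v \<Longrightarrow>
    ap (Rn i) v = (\<lambda>a. (q + 1 / q) * ap (Sn i) v a - (1 / q) * v a)"
proof -
  assume i: "1 \<le> i" "Suc i \<le> n" and v: "cplx.nrm N n v"
  have "opeq N n (Rn i) (emb [i, Suc i] (\<lambda>a b. q * S2 a b - inverse q * A2 a b))" using tr2[OF ii5 i] .
  also have "emb [i, Suc i] (\<lambda>a b. q * S2 a b - inverse q * A2 a b) = (\<lambda>a b. q * Sn i a b - inverse q * An i a b)"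
    by (simp add: emb_diff emb_scal)
  finally have "ap (Rn i) v = ap (\<lambda>a b. q * Sn i a b - inverse q * An i a b) v" by (rule cplx.sapp_opeq)
  also have "\<dots> = (\<lambda>a. q * ap (Sn i) v a - inverse q * ap (An i) v a)"
    by (simp add: cplx.sapp_diff_o cplx.sapp_scal_o)
  also have "\<dots> = (\<lambda>a. (q + 1 / q) * ap (Sn i) v a - (1 / q) * v a)"
    by (simp add: A_vec[OF i v] fun_eq_iff algebra_simps divide_inverse)
  finally show ?thesis .
qed

lemma nrm_lin: "cplx.nrm N n v \<Longrightarrow> cplx.nrm N n w \<Longrightarrow> cplx.nrm N n (\<lambda>a. c * v a + d * w a)"
  by (simp add: cplx.nrm_def)
lemma nrm_lin': "cplx.nrm N n v \<Longrightarrow> cplx.nrm N n w \<Longrightarrow> cplx.nrm N n (\<lambda>a. c * v a - d * w a)"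
  by (simp add: cplx.nrm_def)

lemma hecke_vec: "1 \<le> i \<Longrightarrow> Suc i \<le> n \<Longrightarrow> cplx.nrm N n v \<Longrightarrow>
    ap (Rn i) (ap (Rn i) v) = (\<lambda>a. (q - 1 / q) * ap (Rn i) v a + v a)"
proof -
  assume i: "1 \<le> i" "Suc i \<le> n" and v: "cplx.nrm N n v"
  let ?s = "ap (Sn i) v"
  have r: "ap (Rn i) v = (\<lambda>a. (q + 1 / q) * ?s a - (1 / q) * v a)" using R_vec[OF i v] .
  have nr: "cplx.nrm N n (ap (Rn i) v)" by simp
  have "ap (Rn i) (ap (Rn i) v) = (\<lambda>a. (q + 1 / q) * ap (Sn i) (ap (Rn i) v) a - (1 / q) * ap (Rn i) v a)"
    using R_vec[OF i nr] .
  also have "ap (Sn i) (ap (Rn i) v) = (\<lambda>a. (q + 1 / q) * ?s a - (1 / q) * ?s a)"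
    unfolding r by (simp only: cplx.sapp_diff_v cplx.sapp_scal_v S_vec[OF i])
  finally have f: "ap (Rn i) (ap (Rn i) v) = (\<lambda>a. (q + 1 / q) * ((q + 1 / q) * ?s a - 1 / q * ?s a) - 1 / q * ap (Rn i) v a)" .
  have ra: "\<And>a. ap (Rn i) v a = (q + 1 / q) * ?s a - (1 / q) * v a" using r by (simp add: fun_eq_iff)
  show ?thesis unfolding f fun_eq_iff ra using q0 by (simp add: field_simps)
qed

lemma braid_vec:
  assumes i: "1 \<le> i" "Suc (Suc i) \<le> n"
  shows "ap (Rn i) (ap (Rn (Suc i)) (ap (Rn i) v)) = ap (Rn (Suc i)) (ap (Rn i) (ap (Rn (Suc i)) v))"
proof -
  let ?p = "[i, Suc i, Suc (Suc i)]"
  have "opeq N n (mmul N n (mmul N n (Rn i) (Rn (Suc i))) (Rn i))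
      (mmul N n (mmul N n (emb ?p (emb [1,2] R)) (emb ?p (emb [2,3] R))) (emb ?p (emb [1,2] R)))"
    by (intro mmul_cong opeq_sym[OF emb3_12[OF i]] opeq_sym[OF emb3_23[OF i]])
  also have "opeq N n \<dots> (emb ?p (mmul N 3 (mmul N 3 (emb [1,2] R) (emb [2,3] R)) (emb [1,2] R)))"
    by (rule opeq_sym[OF emb3_prod[OF i]])
  also have "opeq N n \<dots> (emb ?p (mmul N 3 (mmul N 3 (emb [2,3] R) (emb [1,2] R)) (emb [2,3] R)))"
    by (rule tr3[OF i1 i])
  also have "opeq N n \<dots> (mmul N n (mmul N n (emb ?p (emb [2,3] R)) (emb ?p (emb [1,2] R))) (emb ?p (emb [2,3] R)))"
    by (rule emb3_prod[OF i])
  also have "opeq N n \<dots> (mmul N n (mmul N n (Rn (Suc i)) (Rn i)) (Rn (Suc i)))"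
    by (intro mmul_cong emb3_12[OF i] emb3_23[OF i])
  finally show ?thesis
    by (metis cplx.sapp_mmul cplx.sapp_opeq)
qed

lemma R_E_comm:
  assumes k: "1 \<le> k" "Suc k \<le> n"
  shows "ap (Rn k) (ap (Ek (k - 1)) v) = ap (Ek (k - 1)) (ap (Rn k) v)"
proof -
  have o1: "okp n [k, Suc k]" using k by (auto simp: okp_def)
  have o2: "okp n [1..<Suc (k - 1)]" using k by (auto simp: okp_def)
  have dj: "set [k, Suc k] \<inter> set [1..<Suc (k - 1)] = {}" using k by auto
  show ?thesis using mm_comm_emb[OF o1 o2 dj, of N R "asym N q R (k - 1)"]
    by (metis cplx.sapp_mmul cplx.sapp_opeq)
qed

lemma emb_lin2: "emb P (\<lambda>a b. c * X a b - d * Y a b) = (\<lambda>a b. c * emb P X a b - d * emb P Y a b :: complex)"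
  by (auto simp: emb_def fun_eq_iff)

lemma E1: "opeq N n (Ek 1) idop"
  using emb_idop_opeq[of "[1..<Suc 1]" n N] n1 by simp

lemma E1_vec: "cplx.nrm N n v \<Longrightarrow> ap (Ek 1) v = v"
  using cplx.sapp_opeq[OF E1] cplx.sapp_idop by metis

lemma E_rec:
  assumes k: "1 \<le> k" "Suc k \<le> n"
  shows "opeq N n (Ek (Suc k)) (\<lambda>a b. (1 / qnum (Suc k) q) *
           mmul N n (mmul N n (Ek k) (\<lambda>a b. q ^ k * idop a b - qnum k q * Rn k a b)) (Ek k) a b)"
proof -
  obtain k' where k': "k = Suc k'" using k by (cases k) auto
  let ?P = "[1..<Suc (Suc k)]"
  let ?A = "asym N q R k"
  let ?Z = "\<lambda>a b. q ^ k * idop a b - qnum k q * emb [k, Suc k] R a b"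
  have okP: "okp n ?P" using k by (intro okp_prefix) simp
  have lP: "length ?P = Suc k" by simp
  have as: "asym N q R (Suc k) = (\<lambda>a b. asym_step N q R k ?A a b / qnum (Suc k) q)"
    using k' by simp
  have e1: "Ek (Suc k) = (\<lambda>a b. emb ?P (asym_step N q R k ?A) a b / qnum (Suc k) q)"
    unfolding as by (rule emb_div)
  have "opeq N n (emb ?P (asym_step N q R k ?A))
      (mmul N n (mmul N n (emb ?P (emb [1..<Suc k] ?A)) (emb ?P ?Z)) (emb ?P (emb [1..<Suc k] ?A)))"
    using emb_prod3[OF okP, of N "emb [1..<Suc k] ?A" ?Z "emb [1..<Suc k] ?A"]
    unfolding asym_step_def lP .
  also have "opeq N n \<dots> (mmul N n (mmul N n (Ek k) (\<lambda>a b. q ^ k * idop a b - qnum k q * Rn k a b)) (Ek k))"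
  proof -
    have h1: "opeq N n (emb ?P (emb [1..<Suc k] ?A)) (Ek k)"
      using k by (intro emb_emb_prefix) auto
    have h2: "opeq N n (emb ?P ?Z) (\<lambda>a b. q ^ k * idop a b - qnum k q * Rn k a b)"
      unfolding emb_lin2 using k by (intro opeq_diff opeq_scal emb_idop_opeq emb_emb_prefix) auto
    show ?thesis by (intro mmul_cong h1 h2)
  qed
  finally have e2: "opeq N n (emb ?P (asym_step N q R k ?A))
     (mmul N n (mmul N n (Ek k) (\<lambda>a b. q ^ k * idop a b - qnum k q * Rn k a b)) (Ek k))" .
  show ?thesis unfolding e1 using e2 by (simp add: opeq_def)
qed

end


declare upt_Suc[simp del]

context hecke
begin

lemma E_rec_vec:
  assumes k: "1 \<le> k" "Suc k \<le> n"
  shows "ap (Ek (Suc k)) v = (\<lambda>a. (1 / qnum (Suc k) q) *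
      (q ^ k * ap (Ek k) (ap (Ek k) v) a - qnum k q * ap (Ek k) (ap (Rn k) (ap (Ek k) v)) a))"
proof -
  have "ap (Ek (Suc k)) v = ap (\<lambda>a b. (1 / qnum (Suc k) q) *
           mmul N n (mmul N n (Ek k) (\<lambda>a b. q ^ k * idop a b - qnum k q * Rn k a b)) (Ek k) a b) v"
    by (rule cplx.sapp_opeq[OF E_rec[OF k]])
  also have "\<dots> = (\<lambda>a. (1 / qnum (Suc k) q) *
       ap (Ek k) (ap (\<lambda>a b. q ^ k * idop a b - qnum k q * Rn k a b) (ap (Ek k) v)) a)"
    by (simp only: cplx.sapp_scal_o cplx.sapp_mmul)
  also have "ap (\<lambda>a b. q ^ k * idop a b - qnum k q * Rn k a b) (ap (Ek k) v)
      = (\<lambda>a. q ^ k * ap (Ek k) v a - qnum k q * ap (Rn k) (ap (Ek k) v) a)"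
    by (simp only: cplx.sapp_diff_o cplx.sapp_scal_o cplx.sapp_idop[OF cplx.sapp_nrm])
  finally show ?thesis by (simp only: cplx.sapp_diff_v cplx.sapp_scal_v)
qed

lemma E_nrm_id: "cplx.nrm N n w \<Longrightarrow> ap (Ek 1) w = w"
  by (rule E1_vec)

lemma KEY:
  assumes k': "1 \<le> k'" "Suc k' \<le> n"
    and idA: "\<And>w. ap (Ek k') (ap (Ek k') w) = ap (Ek k') w"
    and RiA: "\<And>w i. 1 \<le> i \<Longrightarrow> i < k' \<Longrightarrow> ap (Rn i) (ap (Ek k') w) = (\<lambda>a. -(1/q) * ap (Ek k') w a)"
    and IH2: "2 \<le> k' \<Longrightarrow> (\<And>w. ap (Ek (k' - 1)) (ap (Ek (k' - 1)) w) = ap (Ek (k' - 1)) w)"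
  shows "qnum k' q * ap (Rn k') (ap (Ek k') (ap (Rn k') (ap (Ek k') x))) a
       = q ^ k' * ap (Rn k') (ap (Ek k') x) a + q ^ (k' - 1) * ap (Ek k') x a
         - (1/q) * qnum k' q * ap (Ek k') (ap (Rn k') (ap (Ek k') x)) a"
proof (cases "k' = 1")
  case True
  let ?y = "ap (Ek 1) x"
  have y: "cplx.nrm N n ?y" by simp
  have i: "1 \<le> (1::nat)" "Suc 1 \<le> n" using k' True by auto
  have T2: "ap (Ek 1) (ap (Rn 1) ?y) = ap (Rn 1) ?y" by (rule E1_vec) simp
  have T1: "ap (Rn 1) (ap (Rn 1) ?y) a = (q - 1/q) * ap (Rn 1) ?y a + ?y a"
    using hecke_vec[OF i y] by simp
  show ?thesis unfolding True T2 T1 using q0 by (simp add: field_simps)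
next
  case False
  then obtain j where j: "k' = Suc j" "1 \<le> j" using k' by (cases k') auto
  let ?A = "Ek (Suc j)" and ?A' = "Ek j" and ?R = "Rn (Suc j)" and ?R' = "Rn j"
  let ?c1 = "qnum (Suc j) q" and ?c0 = "qnum j q" and ?p = "q ^ j"
  have jn: "Suc (Suc j) \<le> n" using k' j by simp
  have j1: "1 \<le> j" "Suc j \<le> n" using j jn by auto
  have c1: "?c1 \<noteq> 0" using qnz[of "Suc j"] jn by simp
  have idA': "\<And>w. ap ?A' (ap ?A' w) = ap ?A' w" using IH2[of] j by simp
  have recA0: "\<And>w. ap ?A w = (\<lambda>a. (1 / ?c1) * (?p * ap ?A' w a - ?c0 * ap ?A' (ap ?R' (ap ?A' w)) a))"
    using E_rec_vec[OF j1] by (simp only: idA')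
  have recA: "\<And>w a. ?c1 * ap ?A w a = ?p * ap ?A' w a - ?c0 * ap ?A' (ap ?R' (ap ?A' w)) a"
    using recA0 c1 by (simp add: field_simps)
  have comm: "\<And>w. ap ?R (ap ?A' w) = ap ?A' (ap ?R w)"
    using R_E_comm[of "Suc j"] jn by simp
  let ?y = "ap ?A x"
  let ?Ry = "ap ?R ?y"
  have ny: "cplx.nrm N n ?y" by simp
  have sA: "ap ?A' ?y = ?y"
  proof -
    have e: "?y = (\<lambda>a. (1 / ?c1) * (?p * ap ?A' x a - ?c0 * ap ?A' (ap ?R' (ap ?A' x)) a))"
      by (rule recA0)
    show ?thesis
      by (subst (2) e, subst e) (simp only: cplx.sapp_scal_v cplx.sapp_diff_v idA')
  qed
  have e1: "ap ?A' ?Ry = ?Ry" using comm[of ?y] sA by simp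
  let ?Z = "ap ?A' (ap ?R' ?Ry)"
  let ?T2 = "ap ?A ?Ry"
  have cT2: "\<And>a. ?c1 * ?T2 a = ?p * ?Ry a - ?c0 * ?Z a"
    using recA[of ?Ry] e1 by simp
  have T2eq: "?T2 = (\<lambda>a. (1 / ?c1) * (?p * ?Ry a - ?c0 * ?Z a))"
    using cT2 c1 by (simp add: fun_eq_iff field_simps)
  have RRy: "ap ?R ?Ry = (\<lambda>a. (q - 1/q) * ?Ry a + ?y a)"
    using hecke_vec[of "Suc j" ?y] jn ny by simp
  have Ry': "ap ?R' ?y = (\<lambda>a. -(1/q) * ?y a)"
    using RiA[of j x] j by simp
  have RZ: "ap ?R ?Z = (\<lambda>a. -(1/q) * ?Z a)"
  proof -
    have "ap ?R ?Z = ap ?A' (ap ?R (ap ?R' (ap ?R ?y)))" by (rule comm)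
    also have "ap ?R (ap ?R' (ap ?R ?y)) = ap ?R' (ap ?R (ap ?R' ?y))"
      using braid_vec[OF j1(1) jn, of ?y] by simp
    also have "\<dots> = (\<lambda>a. -(1/q) * ap ?R' ?Ry a)"
      unfolding Ry' by (simp only: cplx.sapp_scal_v)
    finally show ?thesis by (simp only: cplx.sapp_scal_v)
  qed
  have T1: "ap ?R ?T2 = (\<lambda>a. (1 / ?c1) * (?p * ((q - 1/q) * ?Ry a + ?y a) - ?c0 * (-(1/q) * ?Z a)))"
    unfolding T2eq by (simp only: cplx.sapp_scal_v cplx.sapp_diff_v RRy RZ)
  have lhs: "?c1 * ap ?R ?T2 a = ?p * ((q - 1/q) * ?Ry a + ?y a) + (?c0 / q) * ?Z a"
    unfolding T1 using c1 q0 by (simp add: field_simps)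
  have rhs: "(1/q) * ?c1 * ?T2 a = (1/q) * (?p * ?Ry a - ?c0 * ?Z a)"
    using cT2[of a] by (simp only: mult.assoc)
  have pq: "q ^ Suc j = q * ?p" by simp
  show ?thesis unfolding j(1) diff_Suc_1 lhs rhs pq using q0 by (simp add: field_simps)
qed

lemma H:
  "1 \<le> k \<Longrightarrow> k \<le> n \<Longrightarrow> (\<forall>w. ap (Ek k) (ap (Ek k) w) = ap (Ek k) w) \<and>
     (\<forall>w i. 1 \<le> i \<longrightarrow> i < k \<longrightarrow> ap (Rn i) (ap (Ek k) w) = (\<lambda>a. -(1/q) * ap (Ek k) w a))"
proof (induction k rule: less_induct)
  case (less k)
  show ?case
  proof (cases "k = 1")
    case True
    have "\<forall>w. ap (Ek 1) (ap (Ek 1) w) = ap (Ek 1) w" by (intro allI E1_vec cplx.sapp_nrm)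
    then show ?thesis using True by auto
  next
    case False
    then obtain k' where k': "k = Suc k'" "1 \<le> k'" using less.prems by (cases k) auto
    have kn: "Suc k' \<le> n" using less.prems k' by simp
    have IH: "(\<forall>w. ap (Ek k') (ap (Ek k') w) = ap (Ek k') w) \<and>
     (\<forall>w i. 1 \<le> i \<longrightarrow> i < k' \<longrightarrow> ap (Rn i) (ap (Ek k') w) = (\<lambda>a. -(1/q) * ap (Ek k') w a))"
      using less.IH[of k'] k' kn by simp
    then have idA: "\<And>w. ap (Ek k') (ap (Ek k') w) = ap (Ek k') w"
      and RiA: "\<And>w i. 1 \<le> i \<Longrightarrow> i < k' \<Longrightarrow> ap (Rn i) (ap (Ek k') w) = (\<lambda>a. -(1/q) * ap (Ek k') w a)"
      by auto
    have IH2: "2 \<le> k' \<Longrightarrow> (\<And>w. ap (Ek (k' - 1)) (ap (Ek (k' - 1)) w) = ap (Ek (k' - 1)) w)"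
    proof -
      fix w assume "2 \<le> k'"
      then show "ap (Ek (k' - 1)) (ap (Ek (k' - 1)) w) = ap (Ek (k' - 1)) w"
        using less.IH[of "k' - 1"] k' kn by simp
    qed
    let ?A = "Ek k'" and ?R = "Rn k'"
    let ?c = "qnum (Suc k') q" and ?c1 = "qnum k' q" and ?p = "q ^ k'"
    have c: "?c \<noteq> 0" using qnz[of "Suc k'"] kn by simp
    have cq: "?c = ?p + ?c1 / q" by (rule qnum_Suc[OF q0])
    have k1: "1 \<le> k'" "Suc k' \<le> n" using k' kn by auto
    have Bdef: "\<And>x. ap (Ek (Suc k')) x = (\<lambda>a. (1 / ?c) * (?p * ap ?A x a - ?c1 * ap ?A (ap ?R (ap ?A x)) a))"
      using E_rec_vec[OF k1] by (simp only: idA)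
    have pp: "?p = q * q ^ (k' - 1)" using k' by (cases k') auto
    have RB: "\<And>x. ap ?R (ap (Ek (Suc k')) x) = (\<lambda>a. -(1/q) * ap (Ek (Suc k')) x a)"
    proof -
      fix x
      have "ap ?R (ap (Ek (Suc k')) x) = (\<lambda>a. (1 / ?c) * (?p * ap ?R (ap ?A x) a - ?c1 * ap ?R (ap ?A (ap ?R (ap ?A x))) a))"
        unfolding Bdef by (simp only: cplx.sapp_scal_v cplx.sapp_diff_v)
      also have "\<dots> = (\<lambda>a. -(1/q) * ap (Ek (Suc k')) x a)"
      proof
        fix a
        have K: "?c1 * ap ?R (ap ?A (ap ?R (ap ?A x))) a
           = ?p * ap ?R (ap ?A x) a + q ^ (k' - 1) * ap ?A x a - (1/q) * ?c1 * ap ?A (ap ?R (ap ?A x)) a"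
          by (rule KEY[OF k1 idA RiA IH2])
        show "(1 / ?c) * (?p * ap ?R (ap ?A x) a - ?c1 * ap ?R (ap ?A (ap ?R (ap ?A x))) a)
            = -(1/q) * ap (Ek (Suc k')) x a"
          unfolding Bdef K pp using q0 c by (simp add: field_simps)
      qed
      finally show "ap ?R (ap (Ek (Suc k')) x) = (\<lambda>a. -(1/q) * ap (Ek (Suc k')) x a)" .
    qed
    have RiB: "\<And>x i. 1 \<le> i \<Longrightarrow> i < k' \<Longrightarrow> ap (Rn i) (ap (Ek (Suc k')) x) = (\<lambda>a. -(1/q) * ap (Ek (Suc k')) x a)"
    proof -
      fix x i assume i: "1 \<le> i" "i < k'"
      show "ap (Rn i) (ap (Ek (Suc k')) x) = (\<lambda>a. -(1/q) * ap (Ek (Suc k')) x a)"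
        unfolding Bdef by (simp only: cplx.sapp_scal_v cplx.sapp_diff_v RiA[OF i]) (simp add: fun_eq_iff algebra_simps)
    qed
    have AB: "\<And>x. ap ?A (ap (Ek (Suc k')) x) = ap (Ek (Suc k')) x"
    proof -
      fix x
      show "ap ?A (ap (Ek (Suc k')) x) = ap (Ek (Suc k')) x"
        by (subst (2) Bdef, subst Bdef) (simp only: cplx.sapp_scal_v cplx.sapp_diff_v idA)
    qed
    have idB: "\<And>x. ap (Ek (Suc k')) (ap (Ek (Suc k')) x) = ap (Ek (Suc k')) x"
    proof -
      fix x
      let ?b = "ap (Ek (Suc k')) x"
      have "ap (Ek (Suc k')) ?b = (\<lambda>a. (1 / ?c) * (?p * ap ?A ?b a - ?c1 * ap ?A (ap ?R (ap ?A ?b)) a))"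
        by (rule Bdef)
      also have "\<dots> = (\<lambda>a. (1 / ?c) * (?p * ?b a - ?c1 * (-(1/q) * ?b a)))"
        by (simp only: AB RB cplx.sapp_scal_v)
      also have "\<dots> = ?b"
      proof (rule ext)
        fix a
        have "?p * ?b a - ?c1 * (-(1/q) * ?b a) = ?c * ?b a" unfolding cq using q0 by (simp add: field_simps)
        then show "(1 / ?c) * (?p * ?b a - ?c1 * (-(1/q) * ?b a)) = ?b a" using c by simp
      qed
      finally show "ap (Ek (Suc k')) ?b = ?b" .
    qed
    show ?thesis
    proof (intro conjI allI impI)
      fix w show "ap (Ek k) (ap (Ek k) w) = ap (Ek k) w" unfolding k'(1) by (rule idB)
    next
      fix w i assume i: "1 \<le> i" "i < k"
      show "ap (Rn i) (ap (Ek k) w) = (\<lambda>a. -(1/q) * ap (Ek k) w a)"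
      proof (cases "i = k'")
        case True then show ?thesis unfolding k'(1) using RB by simp
      next
        case False then show ?thesis unfolding k'(1) using RiB[of i w] i k' by simp
      qed
    qed
  qed
qed

end


declare upt_Suc[simp del]

context cmod
begin

definition cm :: "nat \<Rightarrow> nat \<Rightarrow> complex op \<Rightarrow> 'b op \<Rightarrow> bool" where
  "cm N m X Y \<longleftrightarrow> opeq N m (lsmul sm N m X Y) (rsmul sm N m Y X)"

lemma tconj:
  assumes Y: "cm N m Y Mv" and XC: "opeq N m (mmul N m X C) (mmul N m C Y)"
    and DX: "opeq N m (mmul N m D X) (mmul N m Y D)"
  shows "cm N m X (lsmul sm N m C (rsmul sm N m Mv D))"
proof -
  let ?ls = "lsmul sm N m" and ?rs = "rsmul sm N m"
  have "opeq N m (?ls X (?ls C (?rs Mv D))) (?ls (mmul N m X C) (?rs Mv D))"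
    by (simp only: lsmul_lsmul opeq_refl)
  also have "opeq N m \<dots> (?ls (mmul N m C Y) (?rs Mv D))"
    by (rule lsmul_cong[OF XC opeq_refl])
  also have "opeq N m \<dots> (?ls C (?rs (?ls Y Mv) D))"
    by (simp only: lsmul_lsmul[symmetric] lsmul_rsmul opeq_refl)
  also have "opeq N m \<dots> (?ls C (?rs (?rs Mv Y) D))"
    using Y unfolding cm_def by (intro lsmul_cong rsmul_cong opeq_refl)
  also have "opeq N m \<dots> (?ls C (?rs Mv (mmul N m Y D)))"
    by (simp only: rsmul_rsmul opeq_refl)
  also have "opeq N m \<dots> (?ls C (?rs Mv (mmul N m D X)))"
    by (intro lsmul_cong rsmul_cong opeq_refl opeq_sym[OF DX])
  also have "opeq N m \<dots> (?rs (?ls C (?rs Mv D)) X)"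
    by (simp only: rsmul_rsmul[symmetric] lsmul_rsmul opeq_refl)
  finally show ?thesis unfolding cm_def .
qed

lemma cm_opeq: "opeq N m X X' \<Longrightarrow> cm N m X Y \<Longrightarrow> cm N m X' Y"
  unfolding cm_def
proof -
  assume a: "opeq N m X X'" and b: "opeq N m (lsmul sm N m X Y) (rsmul sm N m Y X)"
  have "opeq N m (lsmul sm N m X' Y) (lsmul sm N m X Y)" by (intro lsmul_cong opeq_sym[OF a] opeq_refl)
  also note b
  also have "opeq N m (rsmul sm N m Y X) (rsmul sm N m Y X')" by (intro rsmul_cong a opeq_refl)
  finally show "opeq N m (lsmul sm N m X' Y) (rsmul sm N m Y X')" .
qed

lemma cm_lin: "cm N m X Y \<Longrightarrow> cm N m X' Y \<Longrightarrow> cm N m (\<lambda>a b. c * X a b + d * X' a b) Y"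
  unfolding cm_def opeq_def by (simp add: lsmul_add_o rsmul_add_o lsmul_scal_o rsmul_scal_o)

lemma cm_diff: "cm N m X Y \<Longrightarrow> cm N m X' Y \<Longrightarrow> cm N m (\<lambda>a b. X a b - X' a b) Y"
  unfolding cm_def opeq_def by (simp add: lsmul_diff_o rsmul_diff_o)

lemma cm_idop: "cm N m idop Y"
  unfolding cm_def using lsmul_idop rsmul_idop by (metis opeq_sym opeq_trans)

lemma cm_emb: "okp m ps \<Longrightarrow> okp m qs \<Longrightarrow> set ps \<inter> set qs = {} \<Longrightarrow> cm N m (emb ps C) (emb qs X)"
  unfolding cm_def by (rule ls_comm_emb)

end

context calgl
begin

lemma cm_mmul: "cm N m X P \<Longrightarrow> cm N m X Q \<Longrightarrow> cm N m X (mmul N m P Q)"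
proof -
  assume P: "cm N m X P" and Q: "cm N m X Q"
  have "opeq N m (lsmul sm N m X (mmul N m P Q)) (mmul N m (lsmul sm N m X P) Q)"
    by (simp only: mmul_lsmul opeq_refl)
  also have "opeq N m \<dots> (mmul N m (rsmul sm N m P X) Q)"
    using P unfolding cm_def by (intro mmul_cong opeq_refl)
  also have "opeq N m \<dots> (mmul N m P (lsmul sm N m X Q))"
    by (simp only: mmul_rsmul_lsmul opeq_refl)
  also have "opeq N m \<dots> (mmul N m P (rsmul sm N m Q X))"
    using Q unfolding cm_def by (intro mmul_cong opeq_refl)
  also have "opeq N m \<dots> (rsmul sm N m (mmul N m P Q) X)"
    by (simp only: mmul_rsmul opeq_refl)
  finally show ?thesis unfolding cm_def .
qed

end


declare upt_Suc[simp del]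

lemma tr3rel:
  assumes H: "opeq N 3 (mmul N 3 (mmul N 3 (emb [1,2] X) (emb [2,3] Y)) (emb [1,2] Z))
                      (mmul N 3 (mmul N 3 (emb [2,3] U) (emb [1,2] V)) (emb [2,3] (W :: complex op)))"
    and i: "1 \<le> i" "Suc (Suc i) \<le> m"
  shows "opeq N m (mmul N m (mmul N m (emb [i, Suc i] X) (emb [Suc i, Suc (Suc i)] Y)) (emb [i, Suc i] Z))
                  (mmul N m (mmul N m (emb [Suc i, Suc (Suc i)] U) (emb [i, Suc i] V)) (emb [Suc i, Suc (Suc i)] W))"
proof -
  let ?p = "[i, Suc i, Suc (Suc i)]"
  have "opeq N m (mmul N m (mmul N m (emb [i, Suc i] X) (emb [Suc i, Suc (Suc i)] Y)) (emb [i, Suc i] Z))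
      (mmul N m (mmul N m (emb ?p (emb [1,2] X)) (emb ?p (emb [2,3] Y))) (emb ?p (emb [1,2] Z)))"
    by (intro mmul_cong opeq_sym[OF emb3_12[OF i]] opeq_sym[OF emb3_23[OF i]])
  also have "opeq N m \<dots> (emb ?p (mmul N 3 (mmul N 3 (emb [1,2] X) (emb [2,3] Y)) (emb [1,2] Z)))"
    by (rule opeq_sym[OF emb3_prod[OF i]])
  also have "opeq N m \<dots> (emb ?p (mmul N 3 (mmul N 3 (emb [2,3] U) (emb [1,2] V)) (emb [2,3] W)))"
    by (rule tr3[OF H i])
  also have "opeq N m \<dots> (mmul N m (mmul N m (emb ?p (emb [2,3] U)) (emb ?p (emb [1,2] V))) (emb ?p (emb [2,3] W)))"
    by (rule emb3_prod[OF i])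
  also have "opeq N m \<dots> (mmul N m (mmul N m (emb [Suc i, Suc (Suc i)] U) (emb [i, Suc i] V)) (emb [Suc i, Suc (Suc i)] W))"
    by (intro mmul_cong emb3_12[OF i] emb3_23[OF i])
  finally show ?thesis .
qed

lemma inv_prod:
  assumes "opeq N m (mmul N m A B) idop" "opeq N m (mmul N m C D) (idop :: complex op)"
  shows "opeq N m (mmul N m (mmul N m C A) (mmul N m B D)) idop"
proof -
  have "opeq N m (mmul N m (mmul N m C A) (mmul N m B D)) (mmul N m C (mmul N m (mmul N m A B) D))"
    by (simp only: mmul_assoc opeq_refl)
  also have "opeq N m \<dots> (mmul N m C (mmul N m idop D))"
    by (intro mmul_cong assms(1) opeq_refl)
  also have "opeq N m \<dots> (mmul N m C D)"
    by (intro mmul_cong mmul_idop_l opeq_refl)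
  also have "opeq N m \<dots> idop" by (rule assms(2))
  finally show ?thesis .
qed

lemma conj_inv:
  assumes XU: "opeq N m (mmul N m X U) (mmul N m U Y)"
    and UV: "opeq N m (mmul N m U V) idop" and VU: "opeq N m (mmul N m V U) (idop :: complex op)"
  shows "opeq N m (mmul N m V X) (mmul N m Y V)"
proof -
  have "opeq N m (mmul N m V X) (mmul N m (mmul N m V X) idop)"
    by (rule opeq_sym[OF mmul_idop_r])
  also have "opeq N m \<dots> (mmul N m (mmul N m V X) (mmul N m U V))"
    by (intro mmul_cong opeq_refl opeq_sym[OF UV])
  also have "opeq N m \<dots> (mmul N m (mmul N m V (mmul N m X U)) V)"
    by (simp only: mmul_assoc opeq_refl)
  also have "opeq N m \<dots> (mmul N m (mmul N m V (mmul N m U Y)) V)"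
    by (intro mmul_cong opeq_refl XU)
  also have "opeq N m \<dots> (mmul N m (mmul N m (mmul N m V U) Y) V)"
    by (simp only: mmul_assoc opeq_refl)
  also have "opeq N m \<dots> (mmul N m (mmul N m idop Y) V)"
    by (intro mmul_cong opeq_refl VU)
  also have "opeq N m \<dots> (mmul N m Y V)"
    by (intro mmul_cong opeq_refl mmul_idop_l)
  finally show ?thesis .
qed

lemma lin_conj:
  assumes WX: "opeq N m (mmul N m W X) (mmul N m Y W)"
  shows "opeq N m (mmul N m W (\<lambda>a b. \<alpha> * X a b + \<beta> * idop a b))
                  (mmul N m (\<lambda>a b. \<alpha> * Y a b + \<beta> * idop a b) (W :: complex op))"
proof -
  have "opeq N m (mmul N m W (\<lambda>a b. \<alpha> * X a b + \<beta> * idop a b))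
     (\<lambda>a b. \<alpha> * mmul N m W X a b + \<beta> * mmul N m W idop a b)"
    by (simp only: mmul_add_r mmul_scal_r opeq_refl)
  also have "opeq N m \<dots> (\<lambda>a b. \<alpha> * mmul N m Y W a b + \<beta> * mmul N m idop W a b)"
    by (intro opeq_add opeq_scal WX opeq_trans[OF mmul_idop_r opeq_sym[OF mmul_idop_l]])
  also have "opeq N m \<dots> (mmul N m (\<lambda>a b. \<alpha> * Y a b + \<beta> * idop a b) W)"
    by (simp only: mmul_add_l mmul_scal_l opeq_refl)
  finally show ?thesis .
qed

lemma Mbar_Suc: "1 \<le> j \<Longrightarrow> Mbar sm N m F Finv M (Suc j) =
   lsmul sm N m (emb [j, Suc j] F) (rsmul sm N m (Mbar sm N m F Finv M j) (emb [j, Suc j] Finv))"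
  by (cases j) auto

lemma Mprod_Suc: "1 \<le> k \<Longrightarrow> Mprod sm N m F Finv M (Suc k) =
   mmul N m (Mprod sm N m F Finv M k) (Mbar sm N m F Finv M (Suc k))"
  by (cases k) auto

locale ctx = hecke N n q R S2 A2 + calgl sm
  for N n :: nat and q :: complex and R S2 A2 :: "complex op" and sm :: "complex \<Rightarrow> 'a::ring \<Rightarrow> 'a" +
  fixes F Finv :: "complex op" and M :: "'a op"
  assumes Finv1: "opeq N 2 (mmul N 2 F Finv) idop"
    and Finv2: "opeq N 2 (mmul N 2 Finv F) idop"
    and i2: "opeq N 3 (mmul N 3 (mmul N 3 (emb [1,2] F) (emb [2,3] F)) (emb [1,2] F))
                      (mmul N 3 (mmul N 3 (emb [2,3] F) (emb [1,2] F)) (emb [2,3] F))"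
    and i3: "opeq N 3 (mmul N 3 (mmul N 3 (emb [1,2] R) (emb [2,3] F)) (emb [1,2] F))
                      (mmul N 3 (mmul N 3 (emb [2,3] F) (emb [1,2] F)) (emb [2,3] R))"
    and i4: "opeq N 3 (mmul N 3 (mmul N 3 (emb [1,2] F) (emb [2,3] F)) (emb [1,2] R))
                      (mmul N 3 (mmul N 3 (emb [2,3] R) (emb [1,2] F)) (emb [2,3] F))"
    and hq: "opeq N 2 (lsmul sm N 2 S2 (rsmul sm N 2
                 (mmul N 2 (Mbar sm N 2 F Finv M 1) (Mbar sm N 2 F Finv M 2)) A2)) (\<lambda>a b. 0)"
begin

abbreviation "Fn i \<equiv> emb [i, Suc i] F"
abbreviation "Gn i \<equiv> emb [i, Suc i] Finv"
abbreviation "Mb j \<equiv> Mbar sm N n F Finv M j"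
abbreviation "Mp k \<equiv> Mprod sm N n F Finv M k"

lemma emb_inv2:
  fixes X Y :: "complex op"
  assumes H: "opeq N 2 (mmul N 2 X Y) idop" and i: "1 \<le> i" "Suc i \<le> n"
  shows "opeq N n (mmul N n (emb [i, Suc i] X) (emb [i, Suc i] Y)) idop"
proof -
  have "opeq N n (mmul N n (emb [i, Suc i] X) (emb [i, Suc i] Y)) (emb [i, Suc i] (mmul N 2 X Y))"
    by (rule opeq_sym[OF emb2_prod[OF i]])
  also have "opeq N n \<dots> (emb [i, Suc i] idop)" by (rule tr2[OF H i])
  also have "opeq N n \<dots> idop" by (rule emb_idop_opeq) (use i in auto)
  finally show ?thesis .
qed

lemma FG: "1 \<le> i \<Longrightarrow> Suc i \<le> n \<Longrightarrow> opeq N n (mmul N n (Fn i) (Gn i)) idop"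
  by (rule emb_inv2[OF Finv1])

lemma GF: "1 \<le> i \<Longrightarrow> Suc i \<le> n \<Longrightarrow> opeq N n (mmul N n (Gn i) (Fn i)) idop"
  by (rule emb_inv2[OF Finv2])

lemma cm_low: "1 \<le> j \<Longrightarrow> j < i \<Longrightarrow> Suc i \<le> n \<Longrightarrow> cm N n (emb [i, Suc i] X) (Mb j)"
proof (induction j)
  case 0 then show ?case by simp
next
  case (Suc j)
  have oi: "okp n [i, Suc i]" using Suc.prems by (auto simp: okp_def)
  show ?case
  proof (cases "j = 0")
    case True
    have o1: "okp n [1]" using Suc.prems by (auto simp: okp_def)
    have "cm N n (emb [i, Suc i] X) (emb [1] M)"
      by (rule cm_emb[OF oi o1]) (use Suc.prems in auto)
    then show ?thesis using True by simp
  next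
    case False
    have oj: "okp n [j, Suc j]" using Suc.prems False by (auto simp: okp_def)
    have dj: "set [i, Suc i] \<inter> set [j, Suc j] = {}" using Suc.prems by auto
    have IH: "cm N n (emb [i, Suc i] X) (Mb j)" using Suc False by simp
    have c1: "opeq N n (mmul N n (emb [i, Suc i] X) (Fn j)) (mmul N n (Fn j) (emb [i, Suc i] X))"
      by (rule mm_comm_emb[OF oi oj dj])
    have c2: "opeq N n (mmul N n (Gn j) (emb [i, Suc i] X)) (mmul N n (emb [i, Suc i] X) (Gn j))"
      by (rule opeq_sym[OF mm_comm_emb[OF oi oj dj]])
    show ?thesis unfolding Mbar_Suc[of j, OF _] using False
      by (simp add: Mbar_Suc tconj[OF IH c1 c2])
  qed
qed

end


declare upt_Suc[simp del]

context cmod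
begin

lemma cm_inv:
  assumes C: "cm N m C Y" and CD: "opeq N m (mmul N m C D) idop" and DC: "opeq N m (mmul N m D C) idop"
  shows "cm N m D Y"
proof -
  let ?ls = "lsmul sm N m" and ?rs = "rsmul sm N m"
  have Yeq: "opeq N m Y (?ls C (?rs Y D))"
  proof -
    have "opeq N m (?ls C (?rs Y D)) (?rs (?ls C Y) D)" by (simp only: lsmul_rsmul opeq_refl)
    also have "opeq N m \<dots> (?rs (?rs Y C) D)" using C unfolding cm_def by (intro rsmul_cong opeq_refl)
    also have "opeq N m \<dots> (?rs Y (mmul N m C D))" by (simp only: rsmul_rsmul opeq_refl)
    also have "opeq N m \<dots> (?rs Y idop)" by (intro rsmul_cong opeq_refl CD)
    also have "opeq N m \<dots> Y" by (rule rsmul_idop)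
    finally show ?thesis by (rule opeq_sym)
  qed
  have "opeq N m (?ls D Y) (?ls D (?ls C (?rs Y D)))" by (intro lsmul_cong opeq_refl Yeq)
  also have "opeq N m \<dots> (?ls (mmul N m D C) (?rs Y D))" by (simp only: lsmul_lsmul opeq_refl)
  also have "opeq N m \<dots> (?ls idop (?rs Y D))" by (intro lsmul_cong opeq_refl DC)
  also have "opeq N m \<dots> (?rs Y D)" by (rule lsmul_idop)
  finally show ?thesis unfolding cm_def .
qed

end

context ctx
begin

lemma cm_high:
  assumes X3: "opeq N 3 (mmul N 3 (mmul N 3 (emb [1,2] X) (emb [2,3] F)) (emb [1,2] F))
                      (mmul N 3 (mmul N 3 (emb [2,3] F) (emb [1,2] F)) (emb [2,3] X))"
    and i: "1 \<le> i" and j: "Suc (Suc i) \<le> j"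
  shows "j \<le> n \<Longrightarrow> cm N n (emb [i, Suc i] X) (Mb j)"
  using j
proof (induction j rule: dec_induct)
  case base
  let ?U = "mmul N n (Fn (Suc i)) (Fn i)" and ?V = "mmul N n (Gn i) (Gn (Suc i))"
  have i2': "1 \<le> i" "Suc (Suc i) \<le> n" using i base by auto
  have i1': "1 \<le> Suc i" "Suc (Suc i) \<le> n" using i2' by auto
  have i0': "1 \<le> i" "Suc i \<le> n" using i2' by auto
  have eqMb: "Mb (Suc (Suc i)) = lsmul sm N n ?U (rsmul sm N n (Mb i) ?V)"
    using i by (simp only: Mbar_Suc[of "Suc i"] Mbar_Suc[of i] le_SucI lsmul_rsmul[symmetric] lsmul_lsmul rsmul_rsmul)
  have Y: "cm N n (emb [Suc i, Suc (Suc i)] X) (Mb i)"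
    by (rule cm_low) (use i2' in auto)
  have XC: "opeq N n (mmul N n (emb [i, Suc i] X) ?U) (mmul N n ?U (emb [Suc i, Suc (Suc i)] X))"
    using tr3rel[OF X3 i2'] by (simp only: mmul_assoc)
  have UV: "opeq N n (mmul N n ?U ?V) idop" by (rule inv_prod[OF FG[OF i0'] FG[OF i1']])
  have VU: "opeq N n (mmul N n ?V ?U) idop" by (rule inv_prod[OF GF[OF i1'] GF[OF i0']])
  have DX: "opeq N n (mmul N n ?V (emb [i, Suc i] X)) (mmul N n (emb [Suc i, Suc (Suc i)] X) ?V)"
    by (rule conj_inv[OF XC UV VU])
  show ?case unfolding eqMb by (rule tconj[OF Y XC DX])
next
  case (step j)
  have oi: "okp n [i, Suc i]" using step i by (auto simp: okp_def)
  have oj: "okp n [j, Suc j]" using step i by (auto simp: okp_def)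
  have dj: "set [i, Suc i] \<inter> set [j, Suc j] = {}" using step by auto
  have IH: "cm N n (emb [i, Suc i] X) (Mb j)" using step by simp
  have c1: "opeq N n (mmul N n (emb [i, Suc i] X) (Fn j)) (mmul N n (Fn j) (emb [i, Suc i] X))"
    by (rule mm_comm_emb[OF oi oj dj])
  have c2: "opeq N n (mmul N n (Gn j) (emb [i, Suc i] X)) (mmul N n (emb [i, Suc i] X) (Gn j))"
    by (rule opeq_sym[OF mm_comm_emb[OF oi oj dj]])
  have j1: "1 \<le> j" using step i by simp
  show ?case unfolding Mbar_Suc[OF j1] by (rule tconj[OF IH c1 c2])
qed

definition "alpha = q / (1 + q * q)"
definition "beta = 1 / (1 + q * q)"

lemma qq: "1 + q * q \<noteq> 0"
proof
  assume "1 + q * q = 0"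
  then have "q + 1 / q = 0" using q0 by (simp add: field_simps)
  then show False using q2nz by simp
qed

lemma S_lin: "1 \<le> i \<Longrightarrow> Suc i \<le> n \<Longrightarrow> opeq N n (Sn i) (\<lambda>a b. alpha * Rn i a b + beta * idop a b)"
proof -
  assume i: "1 \<le> i" "Suc i \<le> n"
  have R1: "opeq N n (Rn i) (\<lambda>a b. q * Sn i a b - inverse q * An i a b)"
    using tr2[OF ii5 i] by (simp add: emb_diff emb_scal)
  have A1: "opeq N n (An i) (\<lambda>a b. idop a b - Sn i a b)"
  proof -
    have "opeq N n (An i) (emb [i, Suc i] (\<lambda>a b. idop a b - S2 a b))" using tr2[OF A2_eq i] .
    also have "opeq N n \<dots> (\<lambda>a b. emb [i, Suc i] idop a b - Sn i a b)"
      by (simp only: emb_diff opeq_refl)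
    also have "opeq N n \<dots> (\<lambda>a b. idop a b - Sn i a b)"
      by (rule opeq_diff[OF emb_idop_opeq opeq_refl]) (use i in auto)
    finally show ?thesis .
  qed
  show ?thesis unfolding opeq_def
  proof (intro ballI)
    fix a b assume ab: "a \<in> idx n N" "b \<in> idx n N"
    have "Rn i a b = q * Sn i a b - inverse q * (idop a b - Sn i a b)"
      using opeqD[OF R1 ab] opeqD[OF A1 ab] by simp
    then have e: "(1 + q * q) * Sn i a b = q * Rn i a b + idop a b"
      using q0 by (simp add: field_simps)
    then have "Sn i a b = (q * Rn i a b + idop a b) / (1 + q * q)"
      using qq by (simp add: field_simps)
    then show "Sn i a b = alpha * Rn i a b + beta * idop a b"
      unfolding alpha_def beta_def by (simp add: add_divide_distrib)
  qed
qed

lemma A_lin: "1 \<le> i \<Longrightarrow> Suc i \<le> n \<Longrightarrow> opeq N n (An i) (\<lambda>a b. (- alpha) * Rn i a b + (1 - beta) * idop a b)"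
proof -
  assume i: "1 \<le> i" "Suc i \<le> n"
  have A1: "opeq N n (An i) (\<lambda>a b. idop a b - Sn i a b)"
  proof -
    have "opeq N n (An i) (emb [i, Suc i] (\<lambda>a b. idop a b - S2 a b))" using tr2[OF A2_eq i] .
    also have "opeq N n \<dots> (\<lambda>a b. emb [i, Suc i] idop a b - Sn i a b)"
      by (simp only: emb_diff opeq_refl)
    also have "opeq N n \<dots> (\<lambda>a b. idop a b - Sn i a b)"
      by (rule opeq_diff[OF emb_idop_opeq opeq_refl]) (use i in auto)
    finally show ?thesis .
  qed
  show ?thesis unfolding opeq_def
  proof (intro ballI)
    fix a b assume ab: "a \<in> idx n N" "b \<in> idx n N"
    show "An i a b = (- alpha) * Rn i a b + (1 - beta) * idop a b"
      using opeqD[OF A1 ab] opeqD[OF S_lin[OF i] ab] by (simp add: algebra_simps)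
  qed
qed

lemma cm_lin_R:
  assumes "cm N n (Rn i) Y"
  shows "cm N n (\<lambda>a b. c * Rn i a b + d * idop a b) Y"
  by (rule cm_lin[OF assms cm_idop])

lemma cm_S: assumes i: "1 \<le> i" "Suc i \<le> n" and c: "cm N n (Rn i) Y" shows "cm N n (Sn i) Y"
proof -
  have "cm N n (\<lambda>a b. alpha * Rn i a b + beta * idop a b) Y" by (rule cm_lin_R[OF c])
  then show ?thesis by (rule cm_opeq[OF opeq_sym[OF S_lin[OF i]]])
qed

lemma cm_A: assumes i: "1 \<le> i" "Suc i \<le> n" and c: "cm N n (Rn i) Y" shows "cm N n (An i) Y"
proof -
  have "cm N n (\<lambda>a b. (- alpha) * Rn i a b + (1 - beta) * idop a b) Y" by (rule cm_lin_R[OF c])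
  then show ?thesis by (rule cm_opeq[OF opeq_sym[OF A_lin[OF i]]])
qed

lemma cm_high_R: "1 \<le> i \<Longrightarrow> Suc (Suc i) \<le> j \<Longrightarrow> j \<le> n \<Longrightarrow> cm N n (Rn i) (Mb j)"
  by (rule cm_high[OF i3])

lemma cm_high_F: "1 \<le> i \<Longrightarrow> Suc (Suc i) \<le> j \<Longrightarrow> j \<le> n \<Longrightarrow> cm N n (Fn i) (Mb j)"
  by (rule cm_high[OF i2])

lemma cm_high_G: "1 \<le> i \<Longrightarrow> Suc (Suc i) \<le> j \<Longrightarrow> j \<le> n \<Longrightarrow> cm N n (Gn i) (Mb j)"
  by (rule cm_inv[OF cm_high_F FG GF]) auto

end


declare upt_Suc[simp del]

context ctx
begin

lemma emb2_ls: "1 \<le> i \<Longrightarrow> Suc i \<le> n \<Longrightarrow>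
  opeq N n (emb [i, Suc i] (lsmul sm N 2 C X)) (lsmul sm N n (emb [i, Suc i] C) (emb [i, Suc i] X))"
  using emb_lsmul[OF okp2, of i n N C X] by (simp add: numeral_2_eq_2 opeq_sym)
lemma emb2_rs: "1 \<le> i \<Longrightarrow> Suc i \<le> n \<Longrightarrow>
  opeq N n (emb [i, Suc i] (rsmul sm N 2 X C)) (rsmul sm N n (emb [i, Suc i] X) (emb [i, Suc i] C))"
  using emb_rsmul[OF okp2, of i n N X C] by (simp add: numeral_2_eq_2 opeq_sym)
lemma emb2_mm: "1 \<le> i \<Longrightarrow> Suc i \<le> n \<Longrightarrow>
  opeq N n (emb [i, Suc i] (mmul N 2 X Y)) (mmul N n (emb [i, Suc i] X) (emb [i, Suc i] (Y :: 'a op)))"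
  using emb_mmul[OF okp2, of i n N X Y] by (simp add: numeral_2_eq_2 opeq_sym)

lemma embP_emb: "Suc 1 \<le> n \<Longrightarrow> set qs \<subseteq> {1..2} \<Longrightarrow>
   opeq N n (emb [1, Suc 1] (emb qs X)) (emb (map (\<lambda>j. [1, Suc 1] ! (j - 1)) qs) X)"
proof (unfold opeq_def, intro ballI)
  fix a b assume n2: "Suc 1 \<le> n" and qs: "set qs \<subseteq> {1..2}" and a: "a \<in> idx n N" and b: "b \<in> idx n N"
  have ok: "okp n [1, Suc 1]" by (rule okp2) (use n2 in auto)
  have qs': "set qs \<subseteq> {1..length [1, Suc 1]}" using qs by (simp add: numeral_2_eq_2)
  show "emb [1, Suc 1] (emb qs X) a b = emb (map (\<lambda>j. [1, Suc 1] ! (j - 1)) qs) X a b"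
    by (rule emb_emb[OF ok qs']) (use a b in simp_all)
qed

lemma Mbar2_1: "Mbar sm N 2 F Finv M 1 = emb [1] M"
  by (simp add: One_nat_def)
lemma Mbar2_2: "Mbar sm N 2 F Finv M 2 = lsmul sm N 2 (emb [1, 2] F) (rsmul sm N 2 (emb [1] M) (emb [1, 2] Finv))"
  by (simp add: numeral_2_eq_2 One_nat_def)

lemma M3_base:
  assumes n2: "Suc 1 \<le> n"
  shows "opeq N n (lsmul sm N n (Sn 1) (rsmul sm N n (mmul N n (Mb 1) (Mb (Suc 1))) (An 1))) (\<lambda>a b. 0)"
proof -
  let ?P = "[1, Suc 1]"
  let ?X1 = "emb [1] M"
  let ?X2 = "lsmul sm N 2 (emb [1, 2] F) (rsmul sm N 2 (emb [1] M) (emb [1, 2] Finv))"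
  have i: "1 \<le> (1::nat)" "Suc 1 \<le> n" using n2 by auto
  have h0: "opeq N 2 (lsmul sm N 2 S2 (rsmul sm N 2 (mmul N 2 ?X1 ?X2) A2)) (\<lambda>a b. 0)"
    using hq unfolding Mbar2_1 Mbar2_2 .
  have e1: "opeq N n (emb ?P ?X1) (Mb 1)"
    using embP_emb[OF n2, of "[1]" M] by (simp add: One_nat_def)
  have e12: "\<And>Z. opeq N n (emb ?P (emb [1, 2] Z)) (emb [1, Suc 1] Z)"
    using embP_emb[OF n2, of "[1,2]"] by (simp add: One_nat_def numeral_2_eq_2)
  have e2: "opeq N n (emb ?P ?X2) (Mb (Suc 1))"
  proof -
    have "opeq N n (emb ?P ?X2) (lsmul sm N n (emb ?P (emb [1, 2] F)) (emb ?P (rsmul sm N 2 (emb [1] M) (emb [1, 2] Finv))))"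
      by (rule emb2_ls[OF i])
    also have "opeq N n \<dots> (lsmul sm N n (emb ?P (emb [1, 2] F)) (rsmul sm N n (emb ?P (emb [1] M)) (emb ?P (emb [1, 2] Finv))))"
      by (intro lsmul_cong opeq_refl emb2_rs[OF i])
    also have "opeq N n \<dots> (lsmul sm N n (Fn 1) (rsmul sm N n (Mb 1) (Gn 1)))"
      by (intro lsmul_cong rsmul_cong e12 e1)
    also have "lsmul sm N n (Fn 1) (rsmul sm N n (Mb 1) (Gn 1)) = Mb (Suc 1)"
      by (simp only: Mbar_Suc[of 1] le_refl)
    finally show ?thesis .
  qed
  have "opeq N n (lsmul sm N n (Sn 1) (rsmul sm N n (mmul N n (Mb 1) (Mb (Suc 1))) (An 1)))
      (lsmul sm N n (emb ?P S2) (rsmul sm N n (mmul N n (emb ?P ?X1) (emb ?P ?X2)) (emb ?P A2)))"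
    by (intro lsmul_cong rsmul_cong mmul_cong opeq_refl opeq_sym[OF e1] opeq_sym[OF e2])
  also have "opeq N n \<dots> (lsmul sm N n (emb ?P S2) (rsmul sm N n (emb ?P (mmul N 2 ?X1 ?X2)) (emb ?P A2)))"
    by (intro lsmul_cong rsmul_cong opeq_refl opeq_sym[OF emb2_mm[OF i]])
  also have "opeq N n \<dots> (lsmul sm N n (emb ?P S2) (emb ?P (rsmul sm N 2 (mmul N 2 ?X1 ?X2) A2)))"
    by (intro lsmul_cong opeq_refl opeq_sym[OF emb2_rs[OF i]])
  also have "opeq N n \<dots> (emb ?P (lsmul sm N 2 S2 (rsmul sm N 2 (mmul N 2 ?X1 ?X2) A2)))"
    by (rule opeq_sym[OF emb2_ls[OF i]])
  also have "opeq N n \<dots> (emb ?P (\<lambda>a b. 0))"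
    by (rule tr2[OF h0 i])
  also have "emb ?P (\<lambda>a b. 0) = (\<lambda>a b. (0::'a))" by (rule emb_zero)
  finally show ?thesis .
qed

lemma M3:
  "1 \<le> i \<Longrightarrow> Suc i \<le> n \<Longrightarrow>
   opeq N n (lsmul sm N n (Sn i) (rsmul sm N n (mmul N n (Mb i) (Mb (Suc i))) (An i))) (\<lambda>a b. 0)"
proof (induction i)
  case 0 then show ?case by simp
next
  case (Suc i)
  show ?case
  proof (cases "i = 0")
    case True then show ?thesis using M3_base Suc.prems by simp
  next
    case False
    have i2': "1 \<le> i" "Suc (Suc i) \<le> n" using Suc.prems False by auto
    have i0': "1 \<le> i" "Suc i \<le> n" using i2' by auto
    have i1': "1 \<le> Suc i" "Suc (Suc i) \<le> n" using i2' by auto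
    have IH: "opeq N n (lsmul sm N n (Sn i) (rsmul sm N n (mmul N n (Mb i) (Mb (Suc i))) (An i))) (\<lambda>a b. 0)"
      using Suc.IH i0' by simp
    let ?ls = "lsmul sm N n" and ?rs = "rsmul sm N n"
    let ?W = "mmul N n (Fn i) (Fn (Suc i))" and ?W' = "mmul N n (Gn (Suc i)) (Gn i)"
    let ?Mi = "Mb i" and ?M1 = "Mb (Suc i)" and ?M2 = "Mb (Suc (Suc i))"
    let ?P = "mmul N n ?Mi ?M1"
    have WR: "opeq N n (mmul N n ?W (Rn i)) (mmul N n (Rn (Suc i)) ?W)"
      using tr3rel[OF i4 i2'] by (simp only: mmul_assoc)
    have WW': "opeq N n (mmul N n ?W ?W') idop" by (rule inv_prod[OF FG[OF i1'] FG[OF i0']])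
    have W'W: "opeq N n (mmul N n ?W' ?W) idop" by (rule inv_prod[OF GF[OF i0'] GF[OF i1']])
    have W'R: "opeq N n (mmul N n ?W' (Rn (Suc i))) (mmul N n (Rn i) ?W')"
      by (rule conj_inv[OF opeq_sym[OF WR] WW' W'W])
    have WS: "opeq N n (mmul N n (Sn (Suc i)) ?W) (mmul N n ?W (Sn i))"
    proof -
      have "opeq N n (mmul N n (Sn (Suc i)) ?W) (mmul N n (\<lambda>a b. alpha * Rn (Suc i) a b + beta * idop a b) ?W)"
        by (intro mmul_cong opeq_refl S_lin[OF i1'])
      also have "opeq N n \<dots> (mmul N n ?W (\<lambda>a b. alpha * Rn i a b + beta * idop a b))"
        by (rule opeq_sym[OF lin_conj[OF WR]])
      also have "opeq N n \<dots> (mmul N n ?W (Sn i))"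
        by (intro mmul_cong opeq_refl opeq_sym[OF S_lin[OF i0']])
      finally show ?thesis .
    qed
    have W'A: "opeq N n (mmul N n ?W' (An (Suc i))) (mmul N n (An i) ?W')"
    proof -
      have "opeq N n (mmul N n ?W' (An (Suc i))) (mmul N n ?W' (\<lambda>a b. (- alpha) * Rn (Suc i) a b + (1 - beta) * idop a b))"
        by (intro mmul_cong opeq_refl A_lin[OF i1'])
      also have "opeq N n \<dots> (mmul N n (\<lambda>a b. (- alpha) * Rn i a b + (1 - beta) * idop a b) ?W')"
        by (rule lin_conj[OF W'R])
      also have "opeq N n \<dots> (mmul N n (An i) ?W')"
        by (intro mmul_cong opeq_refl opeq_sym[OF A_lin[OF i0']])
      finally show ?thesis .
    qed
    have eM1: "?M1 = ?ls (Fn i) (?rs ?Mi (Gn i))" by (rule Mbar_Suc[OF i0'(1)])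
    have eM2: "?M2 = ?ls (Fn (Suc i)) (?rs ?M1 (Gn (Suc i)))" by (rule Mbar_Suc) simp
    have cG: "cm N n (Gn i) ?M2" by (rule cm_high_G) (use i2' in auto)
    have cF: "cm N n (Fn (Suc i)) ?Mi" by (rule cm_low) (use i2' in auto)
    have L: "opeq N n (mmul N n ?M1 ?M2) (?ls (Fn i) (?rs (mmul N n ?Mi ?M2) (Gn i)))"
    proof -
      have "opeq N n (mmul N n ?M1 ?M2) (?ls (Fn i) (mmul N n ?Mi (?ls (Gn i) ?M2)))"
        unfolding eM1 by (simp only: mmul_lsmul mmul_rsmul_lsmul opeq_refl)
      also have "opeq N n \<dots> (?ls (Fn i) (mmul N n ?Mi (?rs ?M2 (Gn i))))"
        using cG unfolding cm_def by (intro lsmul_cong mmul_cong opeq_refl)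
      also have "opeq N n \<dots> (?ls (Fn i) (?rs (mmul N n ?Mi ?M2) (Gn i)))"
        by (simp only: mmul_rsmul opeq_refl)
      finally show ?thesis .
    qed
    have Rr: "opeq N n (?ls ?W (?rs ?P ?W')) (?ls (Fn i) (?rs (mmul N n ?Mi ?M2) (Gn i)))"
    proof -
      have "opeq N n (?ls ?W (?rs ?P ?W')) (?ls (Fn i) (?rs (?ls (Fn (Suc i)) (?rs ?P (Gn (Suc i)))) (Gn i)))"
        by (simp only: lsmul_lsmul rsmul_rsmul lsmul_rsmul[symmetric] opeq_refl)
      also have "opeq N n \<dots> (?ls (Fn i) (?rs (mmul N n ?Mi ?M2) (Gn i)))"
      proof (intro lsmul_cong rsmul_cong opeq_refl)
        have "opeq N n (?ls (Fn (Suc i)) (?rs ?P (Gn (Suc i)))) (mmul N n (?ls (Fn (Suc i)) ?Mi) (?rs ?M1 (Gn (Suc i))))"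
          by (simp only: mmul_lsmul mmul_rsmul lsmul_rsmul opeq_refl)
        also have "opeq N n \<dots> (mmul N n (?rs ?Mi (Fn (Suc i))) (?rs ?M1 (Gn (Suc i))))"
          using cF unfolding cm_def by (intro mmul_cong opeq_refl)
        also have "opeq N n \<dots> (mmul N n ?Mi ?M2)"
          unfolding eM2 by (simp only: mmul_rsmul_lsmul opeq_refl)
        finally show "opeq N n (?ls (Fn (Suc i)) (?rs ?P (Gn (Suc i)))) (mmul N n ?Mi ?M2)" .
      qed
      finally show ?thesis .
    qed
    have Meq: "opeq N n (mmul N n ?M1 ?M2) (?ls ?W (?rs ?P ?W'))"
      by (rule opeq_trans[OF L opeq_sym[OF Rr]])
    have "opeq N n (?ls (Sn (Suc i)) (?rs (mmul N n ?M1 ?M2) (An (Suc i))))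
        (?ls (Sn (Suc i)) (?rs (?ls ?W (?rs ?P ?W')) (An (Suc i))))"
      by (intro lsmul_cong rsmul_cong opeq_refl Meq)
    also have "opeq N n \<dots> (?ls (mmul N n (Sn (Suc i)) ?W) (?rs ?P (mmul N n ?W' (An (Suc i)))))"
      by (simp only: lsmul_lsmul rsmul_rsmul lsmul_rsmul[symmetric] opeq_refl)
    also have "opeq N n \<dots> (?ls (mmul N n ?W (Sn i)) (?rs ?P (mmul N n (An i) ?W')))"
      by (intro lsmul_cong rsmul_cong opeq_refl WS W'A)
    also have "opeq N n \<dots> (?ls ?W (?rs (?ls (Sn i) (?rs ?P (An i))) ?W'))"
      by (simp only: lsmul_lsmul rsmul_rsmul lsmul_rsmul[symmetric] opeq_refl)
    also have "opeq N n \<dots> (?ls ?W (?rs (\<lambda>a b. 0) ?W'))"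
      by (intro lsmul_cong rsmul_cong opeq_refl IH)
    also have "?ls ?W (?rs (\<lambda>a b. 0) ?W') = (\<lambda>a b. 0)" by simp
    finally show ?thesis by simp
  qed
qed

lemma cm_Mp: "1 \<le> j \<Longrightarrow> j < i \<Longrightarrow> Suc i \<le> n \<Longrightarrow> cm N n (emb [i, Suc i] X) (Mp j)"
proof (induction j)
  case 0 then show ?case by simp
next
  case (Suc j)
  show ?case
  proof (cases "j = 0")
    case True then show ?thesis using cm_low[of 1 i X] Suc.prems by simp
  next
    case False
    then have j1: "1 \<le> j" by simp
    have "cm N n (emb [i, Suc i] X) (mmul N n (Mp j) (Mb (Suc j)))"
      using Suc False by (intro cm_mmul cm_low) auto
    then show ?thesis unfolding Mprod_Suc[OF j1] .
  qed
qed

lemma claim: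
  "1 \<le> k \<Longrightarrow> k \<le> n \<Longrightarrow> 1 \<le> i \<Longrightarrow> i < k \<Longrightarrow>
   opeq N n (lsmul sm N n (Sn i) (rsmul sm N n (Mp k) (An i))) (\<lambda>a b. 0)"
proof (induction k)
  case 0 then show ?case by simp
next
  case (Suc k)
  let ?ls = "lsmul sm N n" and ?rs = "rsmul sm N n"
  have k1: "1 \<le> k" using Suc.prems by simp
  have eMp: "Mp (Suc k) = mmul N n (Mp k) (Mb (Suc k))" by (rule Mprod_Suc[OF k1])
  show ?case
  proof (cases "i < k")
    case True
    have IH: "opeq N n (?ls (Sn i) (?rs (Mp k) (An i))) (\<lambda>a b. 0)"
      using Suc.IH Suc.prems True k1 by simp
    have cA: "cm N n (An i) (Mb (Suc k))"
      using Suc.prems True by (intro cm_A cm_high_R) auto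
    have "opeq N n (?ls (Sn i) (?rs (Mp (Suc k)) (An i))) (?ls (Sn i) (mmul N n (Mp k) (?rs (Mb (Suc k)) (An i))))"
      unfolding eMp by (simp only: mmul_rsmul opeq_refl)
    also have "opeq N n \<dots> (?ls (Sn i) (mmul N n (Mp k) (?ls (An i) (Mb (Suc k)))))"
      using cA unfolding cm_def by (intro lsmul_cong mmul_cong opeq_refl) (rule opeq_sym)
    also have "opeq N n \<dots> (mmul N n (?ls (Sn i) (?rs (Mp k) (An i))) (Mb (Suc k)))"
      by (simp only: mmul_lsmul mmul_rsmul_lsmul opeq_refl)
    also have "opeq N n \<dots> (mmul N n (\<lambda>a b. 0) (Mb (Suc k)))"
      by (intro mmul_cong opeq_refl IH)
    finally show ?thesis by simp
  next
    case False
    then have ik: "i = k" using Suc.prems by simp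
    show ?thesis
    proof (cases "k = 1")
      case True
      have "Mp (Suc 1) = mmul N n (Mb 1) (Mb (Suc 1))" using Mprod_Suc[of 1] by (simp add: One_nat_def)
      then show ?thesis using M3[of 1] Suc.prems ik True by simp
    next
      case False
      then have k2: "1 \<le> k - 1" "Suc (k - 1) = k" using k1 by auto
      have eMp2: "Mp (Suc k) = mmul N n (Mp (k - 1)) (mmul N n (Mb k) (Mb (Suc k)))"
      proof -
        have e3: "Mp k = mmul N n (Mp (k - 1)) (Mb k)"
          using Mprod_Suc[OF k2(1), of sm N n F Finv M] unfolding k2(2) .
        show ?thesis unfolding eMp e3 mmul_assoc ..
      qed
      have cS: "cm N n (Sn k) (Mp (k - 1))" using k2 Suc.prems by (intro cm_Mp) auto
      have M3k: "opeq N n (?ls (Sn k) (?rs (mmul N n (Mb k) (Mb (Suc k))) (An k))) (\<lambda>a b. 0)"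
        using M3[of k] k1 Suc.prems by simp
      have "opeq N n (?ls (Sn k) (?rs (Mp (Suc k)) (An k)))
          (mmul N n (?ls (Sn k) (Mp (k - 1))) (?rs (mmul N n (Mb k) (Mb (Suc k))) (An k)))"
        unfolding eMp2 by (simp only: mmul_lsmul mmul_rsmul lsmul_rsmul opeq_refl)
      also have "opeq N n \<dots> (mmul N n (?rs (Mp (k - 1)) (Sn k)) (?rs (mmul N n (Mb k) (Mb (Suc k))) (An k)))"
        using cS unfolding cm_def by (intro mmul_cong opeq_refl)
      also have "opeq N n \<dots> (mmul N n (Mp (k - 1)) (?ls (Sn k) (?rs (mmul N n (Mb k) (Mb (Suc k))) (An k))))"
        by (simp only: mmul_rsmul_lsmul opeq_refl)
      also have "opeq N n \<dots> (mmul N n (Mp (k - 1)) (\<lambda>a b. 0))"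
        by (intro mmul_cong opeq_refl M3k)
      finally show ?thesis using ik by simp
    qed
  qed
qed

end


declare upt_Suc[simp del]

lemma vec_to_op:
  assumes H: "\<And>w. cplx.sapp N m X w = cplx.sapp N m Y w"
  shows "opeq N m X Y"
  unfolding opeq_def
proof (intro ballI)
  fix a b assume a: "a \<in> idx m N" and b: "b \<in> idx m N"
  let ?w = "\<lambda>c. if c = b then 1 else (0::complex)"
  have "\<And>Z. cplx.sapp N m Z ?w a = Z a b"
  proof -
    fix Z :: "complex op"
    have "\<And>c. Z a c * ?w c = (if c = b then Z a c else 0)" by simp
    then show "cplx.sapp N m Z ?w a = Z a b" using a b by (simp add: cplx.sapp_def sum.delta')
  qed
  then show "X a b = Y a b" using H[of ?w] by metis
qed

lemma fill_id: "(\<forall>t. j \<le> t \<and> t < j + k \<longrightarrow> t \<in> S) \<Longrightarrow> length c = k \<Longrightarrow> fill k j S a c = c"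
proof (induction k arbitrary: j a c)
  case 0 then show ?case by simp
next
  case (Suc k)
  then obtain x c' where c: "c = x # c'" by (cases c) auto
  have "j \<in> S" using Suc.prems by auto
  moreover have "fill k (Suc j) S a c' = c'" using Suc.prems c by (intro Suc.IH) auto
  ultimately show ?case using c by simp
qed

lemma fill_head: "length c = k \<Longrightarrow> fill (Suc k) 1 {2..Suc k} [i] c = i # c"
  by (simp add: fill_id)

context ctx
begin

lemma R_lin: "1 \<le> i \<Longrightarrow> Suc i \<le> n \<Longrightarrow> opeq N n (Rn i) (\<lambda>a b. (q + 1 / q) * Sn i a b - (1 / q) * idop a b)"
proof -
  assume i: "1 \<le> i" "Suc i \<le> n"
  show ?thesis unfolding opeq_def
  proof (intro ballI)
    fix a b assume ab: "a \<in> idx n N" "b \<in> idx n N"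
    have s: "Sn i a b = q / (1 + q * q) * Rn i a b + 1 / (1 + q * q) * idop a b"
      using opeqD[OF S_lin[OF i] ab] unfolding alpha_def beta_def .
    have aux: "\<And>x. (1 + q * q) * (x / (1 + q * q)) = x" using qq by simp
    have e: "(1 + q * q) * Sn i a b = q * Rn i a b + idop a b"
      unfolding s distrib_left mult.assoc[symmetric] aux by simp
    have r: "Rn i a b = ((1 + q * q) * Sn i a b - idop a b) / q"
      unfolding e using q0 by simp
    show "Rn i a b = (q + 1 / q) * Sn i a b - (1 / q) * idop a b"
      unfolding r using q0 by (simp add: field_simps)
  qed
qed

lemma F3:
  assumes w: "nrm N n w" and Rw: "\<And>i. 1 \<le> i \<Longrightarrow> i < n \<Longrightarrow> sapp N n (Rn i) w = (\<lambda>a. sm (-(1/q)) (w a))"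
  shows "1 \<le> k \<Longrightarrow> k \<le> n \<Longrightarrow> sapp N n (Ek k) w = w"
proof (induction k)
  case 0 then show ?case by simp
next
  case (Suc k)
  show ?case
  proof (cases "k = 0")
    case True then show ?thesis using sapp_opeq[OF E1] sapp_idop[OF w] by simp
  next
    case False
    then have k: "1 \<le> k" "Suc k \<le> n" using Suc.prems by auto
    have IH: "sapp N n (Ek k) w = w" using Suc.IH k by simp
    let ?c = "qnum (Suc k) q" and ?c1 = "qnum k q"
    have c: "?c \<noteq> 0" using qnz[of "Suc k"] k by simp
    have cq: "?c = q ^ k + ?c1 / q" by (rule qnum_Suc[OF q0])
    have Rk: "sapp N n (Rn k) w = (\<lambda>a. sm (-(1/q)) (w a))" using Rw k by simp
    have "sapp N n (Ek (Suc k)) w = sapp N n (\<lambda>a b. (1 / ?c) *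
           mmul N n (mmul N n (Ek k) (\<lambda>a b. q ^ k * idop a b - ?c1 * Rn k a b)) (Ek k) a b) w"
      by (rule sapp_opeq[OF E_rec[OF k]])
    also have "\<dots> = (\<lambda>a. sm (1 / ?c) (sapp N n (Ek k) (sapp N n (\<lambda>a b. q ^ k * idop a b - ?c1 * Rn k a b) w) a))"
      by (simp only: sapp_scal_o sapp_mmul IH)
    also have "sapp N n (\<lambda>a b. q ^ k * idop a b - ?c1 * Rn k a b) w = (\<lambda>a. sm (q ^ k) (w a) - sm ?c1 (sm (-(1/q)) (w a)))"
      by (simp only: sapp_diff_o sapp_scal_o sapp_idop[OF w] Rk)
    also have "\<dots> = (\<lambda>a. sm ?c (w a))"
      unfolding cq by (simp add: sm_mult[symmetric] sm_diff_l[symmetric] diff_divide_eq_iff divide_inverse)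
    also have "sapp N n (Ek k) (\<lambda>a. sm ?c (w a)) = (\<lambda>a. sm ?c (w a))"
      by (simp only: sapp_scal_v IH)
    finally show ?thesis using c by (simp add: sm_mult[symmetric] sm_one)
  qed
qed

end


declare upt_Suc[simp del]

lemma idx_Cons: "i < N \<Longrightarrow> c \<in> idx k N \<Longrightarrow> i # c \<in> idx (Suc k) N"
  unfolding idx_def by simp

lemma fill_tail: "length c = k \<Longrightarrow> fill k (Suc (Suc 0)) {2..Suc k} a c = c"
  by (rule fill_id) auto

context ctx
begin

lemma final:
  fixes eu el :: "nat list \<Rightarrow> complex" and Psi :: "complex op"
  assumes iii2: "\<forall>a\<in>idx n N. \<forall>b\<in>idx n N. asym N q R n a b = eu a * el b"
    and iii3: "(\<Sum>a\<in>idx n N. el a * eu a) = 1"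
  shows "let Mn = Mprod sm N n F Finv M n;
             detq = (\<Sum>a\<in>idx n N. \<Sum>b\<in>idx n N. sm (el a * eu b) (Mn a b));
             D = ptr N 2 {2} Psi;
             Dp = dprod N n D [2..<Suc n];
             An = asym N q R n;
             Mt = ptr N n {2..n} (lsmul sm N n Dp (rsmul sm N n Mn An));
             Dc = ptr N n {2..n} (mmul N n Dp An)
         in (\<forall>a\<in>idx n N. (\<Sum>b\<in>idx n N. sm (eu b) (Mn a b)) = sm (eu a) detq)
            \<and> (\<forall>i<N. \<forall>j<N. Mt [i] [j] = sm (Dc [i] [j]) detq)"
proof -
  let ?An = "asym N q R n"
  let ?Mn = "Mp n"
  let ?Y = "rsmul sm N n ?Mn ?An"
  define v where "v a = (\<Sum>d\<in>idx n N. sm (eu d) (?Mn a d))" for a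
  define detq where "detq = (\<Sum>a\<in>idx n N. \<Sum>b\<in>idx n N. sm (el a * eu b) (?Mn a b))"
  have EnA: "opeq N n (Ek n) ?An"
    unfolding opeq_def
  proof (intro ballI)
    fix a b assume "a \<in> idx n N" "b \<in> idx n N"
    then show "Ek n a b = ?An a b" by (intro emb_full) auto
  qed
  have nn: "1 \<le> n" "n \<le> n" using n1 by auto
  have Hn: "\<And>w i. 1 \<le> i \<Longrightarrow> i < n \<Longrightarrow> ap (Rn i) (ap ?An w) = (\<lambda>a. -(1/q) * ap ?An w a)"
    using H[OF nn] cplx.sapp_opeq[OF EnA] by metis
  have SA: "\<And>i. 1 \<le> i \<Longrightarrow> i < n \<Longrightarrow> opeq N n (mmul N n (An i) ?An) ?An"
  proof -
    fix i assume i: "1 \<le> i" "i < n"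
    have i': "1 \<le> i" "Suc i \<le> n" using i by auto
    show "opeq N n (mmul N n (An i) ?An) ?An"
    proof (rule vec_to_op)
      fix w
      let ?y = "ap ?An w"
      have ny: "cplx.nrm N n ?y" by simp
      have Sy: "ap (Sn i) ?y = (\<lambda>a. 0)"
      proof
        fix a
        have "(q + 1 / q) * ap (Sn i) ?y a - (1 / q) * ?y a = -(1/q) * ?y a"
          using fun_cong[OF R_vec[OF i' ny], of a] fun_cong[OF Hn[OF i], of w a] by simp
        then have "(q + 1 / q) * ap (Sn i) ?y a = 0" by simp
        then show "ap (Sn i) ?y a = 0" using q2nz by simp
      qed
      show "ap (mmul N n (An i) ?An) w = ap ?An w"
        unfolding cplx.sapp_mmul A_vec[OF i' ny] Sy by simp
    qed
  qed
  have YS: "\<And>i. 1 \<le> i \<Longrightarrow> i < n \<Longrightarrow> opeq N n (lsmul sm N n (Sn i) ?Y) (\<lambda>a b. 0)"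
  proof -
    fix i assume i: "1 \<le> i" "i < n"
    have "opeq N n (lsmul sm N n (Sn i) ?Y) (lsmul sm N n (Sn i) (rsmul sm N n ?Mn (mmul N n (An i) ?An)))"
      by (intro lsmul_cong rsmul_cong opeq_refl opeq_sym[OF SA[OF i]])
    also have "opeq N n \<dots> (rsmul sm N n (lsmul sm N n (Sn i) (rsmul sm N n ?Mn (An i))) ?An)"
      by (simp only: rsmul_rsmul[symmetric] lsmul_rsmul opeq_refl)
    also have "opeq N n \<dots> (rsmul sm N n (\<lambda>a b. 0) ?An)"
      by (intro rsmul_cong opeq_refl claim) (use i n1 in auto)
    also have "rsmul sm N n (\<lambda>a b. 0) ?An = (\<lambda>a b. 0)" by simp
    finally show "opeq N n (lsmul sm N n (Sn i) ?Y) (\<lambda>a b. 0)" .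
  qed
  have colfix: "\<And>a b. a \<in> idx n N \<Longrightarrow> b \<in> idx n N \<Longrightarrow> (\<Sum>c\<in>idx n N. sm (?An a c) (?Y c b)) = ?Y a b"
  proof -
    fix a b assume a: "a \<in> idx n N" and b: "b \<in> idx n N"
    define w where "w c = (if c \<in> idx n N then ?Y c b else 0)" for c
    have nw: "nrm N n w" by (simp add: nrm_def w_def)
    have Sw: "\<And>i. 1 \<le> i \<Longrightarrow> i < n \<Longrightarrow> sapp N n (Sn i) w = (\<lambda>a. 0)"
    proof
      fix i x assume i: "1 \<le> i" "i < n"
      show "sapp N n (Sn i) w x = 0"
      proof (cases "x \<in> idx n N")
        case True
        have "sapp N n (Sn i) w = sapp N n (Sn i) (\<lambda>c. ?Y c b)" by (rule sapp_cong) (simp add: w_def)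
        then have "sapp N n (Sn i) w x = lsmul sm N n (Sn i) ?Y x b" using lsmul_col[OF True] by simp
        also have "\<dots> = 0" using opeqD[OF YS[OF i] True b] by simp
        finally show ?thesis .
      next
        case False then show ?thesis by (simp add: sapp_def)
      qed
    qed
    have Rw: "\<And>i. 1 \<le> i \<Longrightarrow> i < n \<Longrightarrow> sapp N n (Rn i) w = (\<lambda>a. sm (-(1/q)) (w a))"
    proof -
      fix i assume i: "1 \<le> i" "i < n"
      have i': "1 \<le> i" "Suc i \<le> n" using i by auto
      have "sapp N n (Rn i) w = sapp N n (\<lambda>a b. (q + 1 / q) * Sn i a b - (1 / q) * idop a b) w"
        by (rule sapp_opeq[OF R_lin[OF i']])
      also have "\<dots> = (\<lambda>a. sm (q + 1 / q) (sapp N n (Sn i) w a) - sm (1 / q) (w a))"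
        by (simp only: sapp_diff_o sapp_scal_o sapp_idop[OF nw])
      also have "\<dots> = (\<lambda>a. sm (-(1/q)) (w a))"
        by (simp add: Sw[OF i] sm_minus_l)
      finally show "sapp N n (Rn i) w = (\<lambda>a. sm (-(1/q)) (w a))" .
    qed
    have "sapp N n (Ek n) w = w" by (rule F3[OF nw Rw nn])
    then have "sapp N n ?An w = w" using sapp_opeq[OF EnA] by metis
    then have "sapp N n ?An w a = w a" by simp
    moreover have "\<And>c. c \<in> idx n N \<Longrightarrow> w c = ?Y c b" by (simp add: w_def)
    ultimately show "(\<Sum>c\<in>idx n N. sm (?An a c) (?Y c b)) = ?Y a b"
      using a by (simp add: sapp_def)
  qed
  have Yv: "\<And>a b. a \<in> idx n N \<Longrightarrow> b \<in> idx n N \<Longrightarrow> ?Y a b = sm (el b) (v a)"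
  proof -
    fix a b assume a: "a \<in> idx n N" and b: "b \<in> idx n N"
    have "?Y a b = (\<Sum>d\<in>idx n N. sm (?An d b) (?Mn a d))" by (simp add: rsmul_def)
    also have "\<dots> = (\<Sum>d\<in>idx n N. sm (el b) (sm (eu d) (?Mn a d)))"
      using iii2 b by (intro sum.cong refl) (simp add: sm_mult[symmetric] mult.commute)
    also have "\<dots> = sm (el b) (v a)" by (simp add: v_def sm_sum_r)
    finally show "?Y a b = sm (el b) (v a)" .
  qed
  have dv: "detq = (\<Sum>a\<in>idx n N. sm (el a) (v a))"
    unfolding detq_def v_def by (simp add: sm_sum_r sm_mult)
  have key: "\<And>a b. a \<in> idx n N \<Longrightarrow> b \<in> idx n N \<Longrightarrow> sm (el b) (v a) = sm (eu a * el b) detq"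
  proof -
    fix a b assume a: "a \<in> idx n N" and b: "b \<in> idx n N"
    have "sm (el b) (v a) = (\<Sum>c\<in>idx n N. sm (?An a c) (?Y c b))" using colfix[OF a b] Yv[OF a b] by simp
    also have "\<dots> = (\<Sum>c\<in>idx n N. sm (eu a * el b) (sm (el c) (v c)))"
      using iii2 a b Yv by (intro sum.cong refl) (simp add: sm_mult[symmetric] mult.commute mult.left_commute)
    also have "\<dots> = sm (eu a * el b) detq" by (simp add: dv sm_sum_r)
    finally show "sm (el b) (v a) = sm (eu a * el b) detq" .
  qed
  have C1: "\<And>a. a \<in> idx n N \<Longrightarrow> v a = sm (eu a) detq"
  proof -
    fix a assume a: "a \<in> idx n N"
    have "v a = sm (\<Sum>b\<in>idx n N. el b * eu b) (v a)" using iii3 by (simp add: sm_one)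
    also have "\<dots> = (\<Sum>b\<in>idx n N. sm (eu b) (sm (el b) (v a)))"
      by (simp add: sm_sum_l sm_mult[symmetric] mult.commute)
    also have "\<dots> = (\<Sum>b\<in>idx n N. sm (eu a * (el b * eu b)) detq)"
      using key[OF a] by (intro sum.cong refl) (simp add: sm_mult[symmetric] mult.commute mult.left_commute)
    also have "\<dots> = sm (eu a) detq"
      using iii3 by (simp add: sm_sum_l[symmetric] sum_distrib_left[symmetric])
    finally show "v a = sm (eu a) detq" .
  qed
  have YA: "\<And>a b. a \<in> idx n N \<Longrightarrow> b \<in> idx n N \<Longrightarrow> ?Y a b = sm (?An a b) detq"
    using Yv C1 iii2 by (simp add: sm_mult[symmetric] mult.commute)
  have LY: "\<And>Dp a b. a \<in> idx n N \<Longrightarrow> b \<in> idx n N \<Longrightarrow>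
      lsmul sm N n Dp ?Y a b = sm (mmul N n Dp ?An a b) detq"
  proof -
    fix Dp :: "complex op" and a b assume a: "a \<in> idx n N" and b: "b \<in> idx n N"
    have "lsmul sm N n Dp ?Y a b = (\<Sum>c\<in>idx n N. sm (Dp a c) (sm (?An c b) detq))"
      unfolding lsmul_def using YA b by (intro sum.cong refl) simp
    also have "\<dots> = sm (mmul N n Dp ?An a b) detq"
      by (simp add: mmul_def sm_sum_l sm_mult)
    finally show "lsmul sm N n Dp ?Y a b = sm (mmul N n Dp ?An a b) detq" .
  qed
  obtain k where nk: "n = Suc k" using n1 by (cases n) auto
  have card: "card {2..n} = k" using nk by simp
  have C2: "\<And>Dp i j. i < N \<Longrightarrow> j < N \<Longrightarrow>
     ptr N n {2..n} (lsmul sm N n Dp ?Y) [i] [j] = sm (ptr N n {2..n} (mmul N n Dp ?An) [i] [j]) detq"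
  proof -
    fix Dp :: "complex op" and i j :: nat assume i: "i < N" and j: "j < N"
    have "ptr N n {2..n} (lsmul sm N n Dp ?Y) [i] [j] = (\<Sum>c\<in>idx k N. lsmul sm N n Dp ?Y (i # c) (j # c))"
      unfolding ptr_def card unfolding nk by (intro sum.cong refl) (simp add: fill_head fill_tail)
    also have "\<dots> = (\<Sum>c\<in>idx k N. sm (mmul N n Dp ?An (i # c) (j # c)) detq)"
    proof (intro sum.cong refl LY)
      fix c assume "c \<in> idx k N"
      then show "i # c \<in> idx n N" "j # c \<in> idx n N" using i j unfolding nk by (auto intro: idx_Cons)
    qed
    also have "\<dots> = sm (ptr N n {2..n} (mmul N n Dp ?An) [i] [j]) detq"
      unfolding ptr_def card sm_sum_l[symmetric] unfolding nk by (simp add: fill_head fill_tail)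
    finally show "ptr N n {2..n} (lsmul sm N n Dp ?Y) [i] [j] = sm (ptr N n {2..n} (mmul N n Dp ?An) [i] [j]) detq" .
  qed
  show ?thesis
    unfolding Let_def detq_def[symmetric]
    using C1 C2 unfolding v_def by simp
qed

end


theorem mainTheorem3:
  fixes N n :: nat and q :: complex
    and R F Finv S2 A2 Psi :: "complex op"
    and eu el :: "nat list \<Rightarrow> complex"
    and sm :: "complex \<Rightarrow> 'a::ring \<Rightarrow> 'a"
    and M :: "'a op"
  assumes alg: "calg sm"
    and q0: "q \<noteq> 0"
    and n1: "n \<ge> 1"
    \<comment> \<open>R, F automorphisms of V (x) V (Finv the inverse of F)\<close>
    and Rinv: "invertible_op N 2 R"
    and Finv1: "opeq N 2 (mmul N 2 F Finv) idop"
    and Finv2: "opeq N 2 (mmul N 2 Finv F) idop"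
    \<comment> \<open>condition (i)\<close>
    and i1: "opeq N 3 (mmul N 3 (mmul N 3 (emb [1,2] R) (emb [2,3] R)) (emb [1,2] R))
                      (mmul N 3 (mmul N 3 (emb [2,3] R) (emb [1,2] R)) (emb [2,3] R))"
    and i2: "opeq N 3 (mmul N 3 (mmul N 3 (emb [1,2] F) (emb [2,3] F)) (emb [1,2] F))
                      (mmul N 3 (mmul N 3 (emb [2,3] F) (emb [1,2] F)) (emb [2,3] F))"
    and i3: "opeq N 3 (mmul N 3 (mmul N 3 (emb [1,2] R) (emb [2,3] F)) (emb [1,2] F))
                      (mmul N 3 (mmul N 3 (emb [2,3] F) (emb [1,2] F)) (emb [2,3] R))"
    and i4: "opeq N 3 (mmul N 3 (mmul N 3 (emb [1,2] F) (emb [2,3] F)) (emb [1,2] R))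
                      (mmul N 3 (mmul N 3 (emb [2,3] R) (emb [1,2] F)) (emb [2,3] F))"
    \<comment> \<open>condition (ii)\<close>
    and ii1: "qadm 2 q"
    and ii2: "opeq N 2 (mmul N 2 S2 S2) S2"
    and ii3: "opeq N 2 (mmul N 2 A2 A2) A2"
    and ii4: "opeq N 2 (\<lambda>a b. S2 a b + A2 a b) idop"
    and ii5: "opeq N 2 R (\<lambda>a b. q * S2 a b - inverse q * A2 a b)"
    \<comment> \<open>condition (iii); rank A^(n) = 1 is expressed through the tensors epsilon\<close>
    and iii1: "qadm n q"
    and iii2: "\<forall>a\<in>idx n N. \<forall>b\<in>idx n N. asym N q R n a b = eu a * el b"
    and iii3: "(\<Sum>a\<in>idx n N. el a * eu a) = 1"
    and iii4: "opeq N (Suc n) (asym_step N q R n (asym N q R n)) (\<lambda>a b. 0)"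
    \<comment> \<open>condition (iv)\<close>
    and iv1: "invertible_op N 2 Psi"
    and iv2: "opeq N 2 (ptr N 3 {2} (mmul N 3 (emb [1,2] Psi) (emb [2,3] F))) flip"
    \<comment> \<open>M is a half-quantum matrix\<close>
    and hq: "opeq N 2 (lsmul sm N 2 S2 (rsmul sm N 2
                 (mmul N 2 (Mbar sm N 2 F Finv M 1) (Mbar sm N 2 F Finv M 2)) A2)) (\<lambda>a b. 0)"
  shows "let Mn = Mprod sm N n F Finv M n;
             detq = (\<Sum>a\<in>idx n N. \<Sum>b\<in>idx n N. sm (el a * eu b) (Mn a b));
             D = ptr N 2 {2} Psi;
             Dp = dprod N n D [2..<Suc n];
             An = asym N q R n;
             Mt = ptr N n {2..n} (lsmul sm N n Dp (rsmul sm N n Mn An));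
             Dc = ptr N n {2..n} (mmul N n Dp An)
         in (\<forall>a\<in>idx n N. (\<Sum>b\<in>idx n N. sm (eu b) (Mn a b)) = sm (eu a) detq)
            \<and> (\<forall>i<N. \<forall>j<N. Mt [i] [j] = sm (Dc [i] [j]) detq)"
proof -
  have cl: "calgl sm" by (rule calg_calgl[OF alg])
  have c: "ctx N n q R S2 A2 sm F Finv M"
    unfolding ctx_def ctx_axioms_def hecke_def
    using cl q0 n1 ii1 ii2 ii4 ii5 i1 iii1 Finv1 Finv2 i2 i3 i4 hq by auto
  show ?thesis by (rule ctx.final[OF c iii2 iii3])
qed

end
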